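(* Let $p$ be a prime, $n$ a positive integer, and let $\widetilde T(n,\mathbf{Q}_p)$ be the group of upper-triangular invertible $n\times n$ matrices $A=\{a_{j,k}\}$ over $\mathbf{Q}_p$ with $|a_{j,j}|_p=1$ for all $j$. Let $N(A)=\max_{1\le j<k\le n}|a_{j,k}|_p^{1/(k-j)}$ and $D(A,A')=\max_j|a_{j,j}-a'_{j,j}|_p$. Then $N(AA')\le\max(N(A),N(A'))$ and $N(A^{-1})=N(A)$ for $A,A'\in\widetilde T(n,\mathbf{Q}_p)$; $N((A')^{-1}A)$ is a left-invariant and $N(A(A')^{-1})$ a right-invariant semi-ultrametric on $\widetilde T(n,\mathbf{Q}_p)$, both compatible with the topology induced from $M_n(\mathbf{Q}_p)$ and proper, so that $\widetilde T(n,\mathbf{Q}_p)$ has large compact open subgroups; $D$ is a semi-ultrametric invariant under both left and right translations; and $\max(N((A')^{-1}A),D(A,A'))$ (resp. $\max(N(A(A')^{-1}),D(A,A'))$) is a left-invariant (resp. right-invariant) ultrametric on $\widetilde T(n,\mathbf{Q}_p)$ determining its usual topology.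
   Context: A semi-ultrametric is a semimetric $d$ with $d(x,z)\le\max(d(x,y),d(y,z))$. A semimetric on a topological group is compatible if open balls are open, proper if closed bounded sets are compact. A topological group has large compact open subgroups if every compact set is contained in a compact open subgroup. *)

theory Defs
  imports "HOL-Analysis.Analysis" "HOL-Algebra.Group"
begin

text \<open>By Ostrowski's theorem the restriction to Q is the p-adic absolute value, so
such a field is (isometrically isomorphic to) the field of p-adic numbers Q_p.\<close>

definition padic_field :: "nat \<Rightarrow> ('a::field_char_0 \<Rightarrow> real) \<Rightarrow> bool" where
  "padic_field p absv \<longleftrightarrow>
     (\<forall>x. absv x \<ge> 0) \<and>
     (\<forall>x. absv x = 0 \<longleftrightarrow> x = 0) \<and>
     (\<forall>x y. absv (x * y) = absv x * absv y) \<and>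
     (\<forall>x y. absv (x + y) \<le> max (absv x) (absv y)) \<and>
     absv (of_nat p) = 1 / real p \<and>
     (\<forall>X :: nat \<Rightarrow> 'a.
        (\<forall>e>0. \<exists>M. \<forall>m\<ge>M. \<forall>k\<ge>M. absv (X m - X k) < e) \<longrightarrow>
        (\<exists>L. \<forall>e>0. \<exists>M. \<forall>m\<ge>M. absv (X m - L) < e)) \<and>
     (\<forall>x. \<forall>e>0. \<exists>q::rat. absv (x - of_rat q) < e)"

section \<open>n x n matrices (indices 0..n-1, entries zero outside)\<close>

type_synonym 'a mat = "nat \<Rightarrow> nat \<Rightarrow> 'a"

definition mat_mult :: "nat \<Rightarrow> 'a::field mat \<Rightarrow> 'a mat \<Rightarrow> 'a mat" where
  "mat_mult n A B = (\<lambda>j k. if j < n \<and> k < n then (\<Sum>l<n. A j l * B l k) else 0)"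

definition mat_one :: "nat \<Rightarrow> 'a::field mat" where
  "mat_one n = (\<lambda>j k. if j < n \<and> j = k then 1 else 0)"

definition is_mat :: "nat \<Rightarrow> 'a::field mat \<Rightarrow> bool" where
  "is_mat n A \<longleftrightarrow> (\<forall>j k. (n \<le> j \<or> n \<le> k) \<longrightarrow> A j k = 0)"

definition Ttilde :: "nat \<Rightarrow> ('a::field_char_0 \<Rightarrow> real) \<Rightarrow> 'a mat set" where
  "Ttilde n absv = {A. is_mat n A \<and>
      (\<forall>j k. k < j \<longrightarrow> A j k = 0) \<and>
      (\<exists>B. is_mat n B \<and> mat_mult n A B = mat_one n \<and> mat_mult n B A = mat_one n) \<and>
      (\<forall>j<n. absv (A j j) = 1)}"

definition Tgroup :: "nat \<Rightarrow> ('a::field_char_0 \<Rightarrow> real) \<Rightarrow> 'a mat monoid" where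
  "Tgroup n absv = \<lparr>carrier = Ttilde n absv, mult = mat_mult n, one = mat_one n\<rparr>"

definition Nval :: "nat \<Rightarrow> ('a::field_char_0 \<Rightarrow> real) \<Rightarrow> 'a mat \<Rightarrow> real" where
  "Nval n absv A = Max ({0} \<union> {absv (A j k) powr (1 / real (k - j)) | j k. j < k \<and> k < n})"

definition Dval :: "nat \<Rightarrow> ('a::field_char_0 \<Rightarrow> real) \<Rightarrow> 'a mat \<Rightarrow> 'a mat \<Rightarrow> real" where
  "Dval n absv A A' = Max ({0} \<union> {absv (A j j - A' j j) | j. j < n})"

text \<open>Sup-distance of entries: induces the topology of M_n(Q_p).\<close>
definition matdist :: "nat \<Rightarrow> ('a::field_char_0 \<Rightarrow> real) \<Rightarrow> 'a mat \<Rightarrow> 'a mat \<Rightarrow> real" where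
  "matdist n absv A B = Max ({0} \<union> {absv (A j k - B j k) | j k. j < n \<and> k < n})"

definition dL :: "nat \<Rightarrow> ('a::field_char_0 \<Rightarrow> real) \<Rightarrow> 'a mat \<Rightarrow> 'a mat \<Rightarrow> real" where
  "dL n absv A A' = Nval n absv (inv\<^bsub>Tgroup n absv\<^esub> A' \<otimes>\<^bsub>Tgroup n absv\<^esub> A)"

definition dR :: "nat \<Rightarrow> ('a::field_char_0 \<Rightarrow> real) \<Rightarrow> 'a mat \<Rightarrow> 'a mat \<Rightarrow> real" where
  "dR n absv A A' = Nval n absv (A \<otimes>\<^bsub>Tgroup n absv\<^esub> inv\<^bsub>Tgroup n absv\<^esub> A')"

definition semimetric_on :: "'b set \<Rightarrow> ('b \<Rightarrow> 'b \<Rightarrow> real) \<Rightarrow> bool" where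
  "semimetric_on S d \<longleftrightarrow> (\<forall>x\<in>S. d x x = 0) \<and> (\<forall>x\<in>S. \<forall>y\<in>S. 0 \<le> d x y \<and> d x y = d y x)"

definition semi_ultrametric_on :: "'b set \<Rightarrow> ('b \<Rightarrow> 'b \<Rightarrow> real) \<Rightarrow> bool" where
  "semi_ultrametric_on S d \<longleftrightarrow> semimetric_on S d \<and>
     (\<forall>x\<in>S. \<forall>y\<in>S. \<forall>z\<in>S. d x z \<le> max (d x y) (d y z))"

definition ultrametric_on :: "'b set \<Rightarrow> ('b \<Rightarrow> 'b \<Rightarrow> real) \<Rightarrow> bool" where
  "ultrametric_on S d \<longleftrightarrow> semi_ultrametric_on S d \<and> (\<forall>x\<in>S. \<forall>y\<in>S. d x y = 0 \<longrightarrow> x = y)"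

definition dtop :: "'b set \<Rightarrow> ('b \<Rightarrow> 'b \<Rightarrow> real) \<Rightarrow> 'b topology" where
  "dtop S d = topology (\<lambda>U. U \<subseteq> S \<and> (\<forall>x\<in>U. \<exists>e>0. \<forall>y\<in>S. d x y < e \<longrightarrow> y \<in> U))"

definition Ttop :: "nat \<Rightarrow> ('a::field_char_0 \<Rightarrow> real) \<Rightarrow> 'a mat topology" where
  "Ttop n absv = dtop (Ttilde n absv) (matdist n absv)"

definition compatible :: "'b topology \<Rightarrow> ('b \<Rightarrow> 'b \<Rightarrow> real) \<Rightarrow> bool" where
  "compatible X d \<longleftrightarrow> (\<forall>x\<in>topspace X. \<forall>r. openin X {y\<in>topspace X. d x y < r})"

definition proper_semimetric :: "'b topology \<Rightarrow> ('b \<Rightarrow> 'b \<Rightarrow> real) \<Rightarrow> bool" where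
  "proper_semimetric X d \<longleftrightarrow>
     (\<forall>K. closedin X K \<and> (\<exists>x\<in>topspace X. \<exists>r. K \<subseteq> {y\<in>topspace X. d x y \<le> r})
          \<longrightarrow> compactin X K)"

definition left_invariant :: "('b, 'c) monoid_scheme \<Rightarrow> ('b \<Rightarrow> 'b \<Rightarrow> real) \<Rightarrow> bool" where
  "left_invariant G d \<longleftrightarrow>
     (\<forall>g\<in>carrier G. \<forall>x\<in>carrier G. \<forall>y\<in>carrier G. d (g \<otimes>\<^bsub>G\<^esub> x) (g \<otimes>\<^bsub>G\<^esub> y) = d x y)"

definition right_invariant :: "('b, 'c) monoid_scheme \<Rightarrow> ('b \<Rightarrow> 'b \<Rightarrow> real) \<Rightarrow> bool" where
  "right_invariant G d \<longleftrightarrow>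
     (\<forall>g\<in>carrier G. \<forall>x\<in>carrier G. \<forall>y\<in>carrier G. d (x \<otimes>\<^bsub>G\<^esub> g) (y \<otimes>\<^bsub>G\<^esub> g) = d x y)"

definition large_compact_open_subgroups :: "('b, 'c) monoid_scheme \<Rightarrow> 'b topology \<Rightarrow> bool" where
  "large_compact_open_subgroups G X \<longleftrightarrow>
     (\<forall>K. compactin X K \<longrightarrow>
        (\<exists>H. subgroup H G \<and> compactin X H \<and> openin X H \<and> K \<subseteq> H))"

end

theory Submission
  imports Defs
begin

locale padic =
  fixes p :: nat and absv :: "'a::field_char_0 \<Rightarrow> real"
  assumes prime_p: "prime p" and pf: "padic_field p absv"
begin

lemmas PF = pf[unfolded padic_field_def]

lemma abs_nonneg[simp]: "absv x \<ge> 0" using PF[THEN conjunct1] by blast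
lemma abs_0_iff[simp]: "absv x = 0 \<longleftrightarrow> x = 0" using PF[THEN conjunct2, THEN conjunct1] by blast
lemma abs_mult: "absv (x * y) = absv x * absv y" using PF[THEN conjunct2, THEN conjunct2, THEN conjunct1] by blast
lemma abs_ultra: "absv (x + y) \<le> max (absv x) (absv y)"
  using PF[THEN conjunct2, THEN conjunct2, THEN conjunct2, THEN conjunct1] by blast
lemma abs_p: "absv (of_nat p) = 1 / real p"
  using PF[THEN conjunct2, THEN conjunct2, THEN conjunct2, THEN conjunct2, THEN conjunct1] by blast
lemma abs_complete:
  fixes X :: "nat \<Rightarrow> 'a"
  assumes "\<forall>e>0. \<exists>M. \<forall>m\<ge>M. \<forall>k\<ge>M. absv (X m - X k) < e"
  shows "\<exists>L. \<forall>e>0. \<exists>M. \<forall>m\<ge>M. absv (X m - L) < e"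
  using PF[THEN conjunct2, THEN conjunct2, THEN conjunct2, THEN conjunct2, THEN conjunct2, THEN conjunct1,
     THEN spec[where x=X]] assms by (rule mp)
lemma abs_dense: "e > 0 \<Longrightarrow> \<exists>q::rat. absv (x - of_rat q) < e"
  using PF[THEN conjunct2, THEN conjunct2, THEN conjunct2, THEN conjunct2, THEN conjunct2, THEN conjunct2] by blast

lemma abs_0[simp]: "absv 0 = 0" by simp

lemma abs_1[simp]: "absv 1 = 1"
proof -
  have "absv 1 = absv 1 * absv 1" using abs_mult[of 1 1] by simp
  moreover have "absv 1 \<noteq> 0" by simp
  ultimately show ?thesis by (metis mult_cancel_left1)
qed

lemma abs_minus[simp]: "absv (- x) = absv x"
proof -
  have "absv (-1) * absv (-1) = 1" using abs_mult[of "-1" "-1"] by simp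
  hence "(absv (-1))^2 = 1" by (simp add: power2_eq_square)
  hence "absv (-1) = 1 \<or> absv (-1) = -1" by (simp add: power2_eq_1_iff)
  hence "absv (-1) = 1" using abs_nonneg[of "-1"] by linarith
  thus ?thesis using abs_mult[of "-1" x] by simp
qed

lemma abs_diff_sym: "absv (x - y) = absv (y - x)"
  by (metis abs_minus minus_diff_eq)

lemma abs_diff_ultra: "absv (x - z) \<le> max (absv (x - y)) (absv (y - z))"
  using abs_ultra[of "x - y" "y - z"] by simp

lemma abs_sum_le: "0 \<le> c \<Longrightarrow> (\<And>i. i \<in> A \<Longrightarrow> absv (f i) \<le> c) \<Longrightarrow> absv (sum f A) \<le> c"
proof (induction A rule: infinite_finite_induct)
  case (insert x F)
  have "absv (f x) \<le> c" "absv (sum f F) \<le> c" using insert by auto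
  have "absv (sum f (insert x F)) = absv (f x + sum f F)" using insert by simp
  also have "\<dots> \<le> max (absv (f x)) (absv (sum f F))" by (rule abs_ultra)
  also have "\<dots> \<le> c" using \<open>absv (f x) \<le> c\<close> \<open>absv (sum f F) \<le> c\<close> by simp
  finally show ?case .
qed auto

lemma abs_strict: "absv y < absv x \<Longrightarrow> absv (x + y) = absv x"
proof -
  assume a: "absv y < absv x"
  have "absv (x + y) \<le> absv x" using abs_ultra[of x y] a by simp
  moreover have "absv x \<le> max (absv (x + y)) (absv (- y))" using abs_ultra[of "x+y" "-y"] by simp
  ultimately show ?thesis using a by auto
qed

lemma abs_inverse: "absv (inverse x) = inverse (absv x)"
proof (cases "x = 0")
  case False
  have "absv x * absv (inverse x) = 1" using abs_mult[of x "inverse x"] False by simp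
  thus ?thesis by (simp add: inverse_unique)
qed simp

lemma abs_divide: "absv (x / y) = absv x / absv y"
  by (simp add: divide_inverse abs_mult abs_inverse)

lemma abs_power: "absv (x ^ k) = absv x ^ k"
  by (induction k) (simp_all add: abs_mult)

end

definition ut :: "nat \<Rightarrow> 'a::field mat \<Rightarrow> bool" where
  "ut n A \<longleftrightarrow> is_mat n A \<and> (\<forall>j k. k < j \<longrightarrow> A j k = 0)"

lemma mm_apply: "j < n \<Longrightarrow> k < n \<Longrightarrow> mat_mult n A B j k = (\<Sum>l<n. A j l * B l k)"
  by (simp add: mat_mult_def)

lemma mm_out: "\<not> (j < n \<and> k < n) \<Longrightarrow> mat_mult n A B j k = 0"
  by (auto simp: mat_mult_def)

lemma is_mat_mm[simp]: "is_mat n (mat_mult n A B)"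
  unfolding is_mat_def mat_mult_def by auto

lemma is_mat_one[simp]: "is_mat n (mat_one n)"
  unfolding is_mat_def mat_one_def by auto

lemma is_mat_out: "is_mat n A \<Longrightarrow> \<not> (j < n \<and> k < n) \<Longrightarrow> A j k = 0"
  unfolding is_mat_def by auto

lemma mat_eqI: "is_mat n A \<Longrightarrow> is_mat n B \<Longrightarrow> (\<And>j k. j < n \<Longrightarrow> k < n \<Longrightarrow> A j k = B j k) \<Longrightarrow> A = B"
  by (intro ext) (metis is_mat_out)

lemma mm_assoc: "mat_mult n (mat_mult n A B) C = mat_mult n A (mat_mult n B C)"
proof (rule mat_eqI[of n])
  fix j k assume jk: "j < n" "k < n"
  have "mat_mult n (mat_mult n A B) C j k = (\<Sum>l<n. (\<Sum>m<n. A j m * B m l) * C l k)"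
    using jk by (auto simp: mm_apply intro!: sum.cong)
  also have "\<dots> = (\<Sum>l<n. \<Sum>m<n. A j m * B m l * C l k)"
    by (simp add: sum_distrib_right)
  also have "\<dots> = (\<Sum>m<n. \<Sum>l<n. A j m * B m l * C l k)"
    by (rule sum.swap)
  also have "\<dots> = (\<Sum>m<n. A j m * (\<Sum>l<n. B m l * C l k))"
    by (simp add: sum_distrib_left mult.assoc)
  also have "\<dots> = mat_mult n A (mat_mult n B C) j k"
    using jk by (auto simp: mm_apply intro!: sum.cong)
  finally show "mat_mult n (mat_mult n A B) C j k = mat_mult n A (mat_mult n B C) j k" .
qed simp_all

lemma mm_one_left: "is_mat n A \<Longrightarrow> mat_mult n (mat_one n) A = A"
proof (rule mat_eqI[of n])
  fix j k assume "is_mat n A" "j < n" "k < n"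
  have "(\<Sum>l<n. mat_one n j l * A l k) = (\<Sum>l<n. if l = j then A j k else 0)"
    by (intro sum.cong) (auto simp: mat_one_def)
  then show "mat_mult n (mat_one n) A j k = A j k"
    using \<open>j < n\<close> \<open>k < n\<close> by (simp add: mm_apply)
qed simp_all

lemma mm_one_right: "is_mat n A \<Longrightarrow> mat_mult n A (mat_one n) = A"
proof (rule mat_eqI[of n])
  fix j k assume "is_mat n A" "j < n" "k < n"
  have "(\<Sum>l<n. A j l * mat_one n l k) = (\<Sum>l<n. if l = k then A j k else 0)"
    by (intro sum.cong) (auto simp: mat_one_def)
  then show "mat_mult n A (mat_one n) j k = A j k"
    using \<open>j < n\<close> \<open>k < n\<close> by (simp add: mm_apply)
qed simp_all

lemma ut_one[simp]: "ut n (mat_one n)"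
  by (simp add: ut_def is_mat_def mat_one_def)

lemma ut_mm:
  assumes "ut n A" "ut n B" shows "ut n (mat_mult n A B)"
  unfolding ut_def
proof (intro conjI allI impI)
  fix j k :: nat assume kj: "k < j"
  show "mat_mult n A B j k = 0"
  proof (cases "j < n \<and> k < n")
    case True
    have "(\<Sum>l<n. A j l * B l k) = 0"
    proof (rule sum.neutral)
      show "\<forall>l\<in>{..<n}. A j l * B l k = 0"
        using assms kj unfolding ut_def by (metis le_less_trans linorder_not_le mult_zero_left mult_zero_right)
    qed
    then show ?thesis using True by (simp add: mm_apply)
  qed (simp add: mm_out)
qed simp

lemma ut_mm_diag:
  assumes "ut n A" "ut n B" "j < n" shows "mat_mult n A B j j = A j j * B j j"
proof -
  have "mat_mult n A B j j = (\<Sum>l<n. A j l * B l j)" using assms by (simp add: mm_apply)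
  also have "\<dots> = (\<Sum>l\<in>{j}. A j l * B l j)"
  proof -
    have "(\<Sum>l\<in>{j}. A j l * B l j) = (\<Sum>l<n. A j l * B l j)"
    proof (rule sum.mono_neutral_left)
      show "\<forall>i\<in>{..<n} - {j}. A j i * B i j = 0"
        using assms unfolding ut_def by (metis DiffE insertI1 linorder_neqE_nat mult_zero_left mult_zero_right)
    qed (use assms in auto)
    then show ?thesis by simp
  qed
  finally show ?thesis by simp
qed

function rinv :: "'a::field mat \<Rightarrow> nat \<Rightarrow> nat \<Rightarrow> 'a" where
  "rinv A j k = (if k < j then 0 else if j = k then inverse (A j j)
      else - inverse (A j j) * (\<Sum>l\<in>{j<..k}. A j l * rinv A l k))"
  by auto
termination by (relation "Wellfounded.measure (\<lambda>(A,j,k). k - j)") auto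

declare rinv.simps[simp del]

definition Binv :: "nat \<Rightarrow> 'a::field mat \<Rightarrow> 'a mat" where
  "Binv n A = (\<lambda>j k. if j < n \<and> k < n then rinv A j k else 0)"

lemma rinv_lt: "k < j \<Longrightarrow> rinv A j k = 0" by (simp add: rinv.simps)
lemma rinv_diag: "rinv A j j = inverse (A j j)" by (simp add: rinv.simps)

lemma ut_Binv: "ut n (Binv n A)"
  by (simp add: ut_def is_mat_def Binv_def rinv_lt)

lemma Binv_diag: "j < n \<Longrightarrow> Binv n A j j = inverse (A j j)"
  by (simp add: Binv_def rinv_diag)

lemma Binv_right:
  assumes A: "ut n A" and nz: "\<forall>j<n. A j j \<noteq> 0"
  shows "mat_mult n A (Binv n A) = mat_one n"
proof (rule mat_eqI[of n])
  fix j k assume jk: "j < n" "k < n"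
  have Az: "\<And>l. l < j \<Longrightarrow> A j l = 0" using A unfolding ut_def by auto
  show "mat_mult n A (Binv n A) j k = mat_one n j k"
  proof (cases "k < j")
    case True
    have "(\<Sum>l<n. A j l * Binv n A l k) = 0"
    proof (intro sum.neutral ballI)
      fix l assume "l \<in> {..<n}"
      show "A j l * Binv n A l k = 0"
      proof (cases "l < j")
        case True thus ?thesis by (simp add: Az)
      next
        case False hence "k < l" using \<open>k < j\<close> by simp
        thus ?thesis by (simp add: Binv_def rinv_lt)
      qed
    qed
    then show ?thesis using True jk by (simp add: mm_apply mat_one_def)
  next
    case False
    have "mat_mult n A (Binv n A) j k = (\<Sum>l<n. A j l * Binv n A l k)" using jk by (simp add: mm_apply)
    also have "\<dots> = (\<Sum>l\<in>{j..k}. A j l * Binv n A l k)"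
    proof -
      have "(\<Sum>l\<in>{j..k}. A j l * Binv n A l k) = (\<Sum>l<n. A j l * Binv n A l k)"
      proof (rule sum.mono_neutral_left)
        show "\<forall>i\<in>{..<n} - {j..k}. A j i * Binv n A i k = 0"
          using Az by (auto simp: Binv_def rinv_lt)
      qed (use jk in auto)
      then show ?thesis by simp
    qed
    also have "\<dots> = A j j * rinv A j k + (\<Sum>l\<in>{j<..k}. A j l * rinv A l k)"
    proof -
      have e: "{j..k} = insert j {j<..k}" using False by auto
      have "(\<Sum>l\<in>{j<..k}. A j l * Binv n A l k) = (\<Sum>l\<in>{j<..k}. A j l * rinv A l k)"
        using jk by (intro sum.cong) (auto simp: Binv_def)
      then show ?thesis unfolding e using jk by (simp add: Binv_def)
    qed
    also have "\<dots> = mat_one n j k"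
    proof (cases "j = k")
      case True
      then show ?thesis using nz jk by (simp add: rinv_diag mat_one_def)
    next
      case ne: False
      have "rinv A j k = - inverse (A j j) * (\<Sum>l\<in>{j<..k}. A j l * rinv A l k)"
        using ne False by (simp add: rinv.simps[of A j k])
      then show ?thesis using ne nz jk by (simp add: mat_one_def)
    qed
    finally show ?thesis .
  qed
qed simp_all

lemma Binv_left:
  assumes A: "ut n A" and nz: "\<forall>j<n. A j j \<noteq> 0"
  shows "mat_mult n (Binv n A) A = mat_one n"
proof -
  let ?B = "Binv n A"
  have nzB: "\<forall>j<n. ?B j j \<noteq> 0" using nz by (simp add: Binv_diag)
  have r1: "mat_mult n A ?B = mat_one n" by (rule Binv_right[OF A nz])
  have r2: "mat_mult n ?B (Binv n ?B) = mat_one n" by (rule Binv_right[OF ut_Binv nzB])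
  have iA: "is_mat n A" using A by (simp add: ut_def)
  have iB: "is_mat n (Binv n ?B)" by (simp add: Binv_def is_mat_def)
  have "A = mat_mult n A (mat_mult n ?B (Binv n ?B))" using r2 iA by (simp add: mm_one_right)
  also have "\<dots> = Binv n ?B" by (simp add: mm_assoc[symmetric] r1 mm_one_left iB)
  finally have e: "A = Binv n ?B" .
  have "mat_mult n ?B A = mat_mult n ?B (Binv n ?B)" using arg_cong[OF e, of "mat_mult n ?B"] .
  then show ?thesis using r2 by simp
qed

lemma powr_le_iff:
  assumes "0 \<le> (a::real)" "0 \<le> r" "0 < m"
  shows "(a powr (1 / real m) \<le> r) \<longleftrightarrow> (a \<le> r ^ m)"
proof (cases "a = 0")
  case True then show ?thesis using assms by simp
next
  case False
  hence a: "0 < a" using assms by simp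
  have e: "(a powr (1 / real m)) ^ m = a"
    using a assms(3) by (simp add: powr_realpow[symmetric] powr_powr)
  have "(a powr (1 / real m) \<le> r) \<longleftrightarrow> (a powr (1 / real m)) ^ m \<le> r ^ m"
    using assms by (intro power_mono_iff[symmetric]) auto
  then show ?thesis using e by simp
qed

context padic
begin

lemma T_char: "A \<in> Ttilde n absv \<longleftrightarrow> ut n A \<and> (\<forall>j<n. absv (A j j) = 1)"
proof
  assume "A \<in> Ttilde n absv"
  then show "ut n A \<and> (\<forall>j<n. absv (A j j) = 1)" by (simp add: Ttilde_def ut_def)
next
  assume a: "ut n A \<and> (\<forall>j<n. absv (A j j) = 1)"
  hence nz: "\<forall>j<n. A j j \<noteq> 0" by (metis abs_0 zero_neq_one)
  have im: "is_mat n (Binv n A)" by (simp add: Binv_def is_mat_def)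
  have r: "mat_mult n A (Binv n A) = mat_one n" using a nz by (simp add: Binv_right)
  have l: "mat_mult n (Binv n A) A = mat_one n" using a nz by (simp add: Binv_left)
  show "A \<in> Ttilde n absv" unfolding Ttilde_def mem_Collect_eq
  proof (intro conjI)
    show "is_mat n A" using a by (simp add: ut_def)
    show "\<forall>j k. k < j \<longrightarrow> A j k = 0" using a by (simp add: ut_def)
    show "\<exists>B. is_mat n B \<and> mat_mult n A B = mat_one n \<and> mat_mult n B A = mat_one n"
      using r l im by blast
    show "\<forall>j<n. absv (A j j) = 1" using a by simp
  qed
qed

lemma T_ut: "A \<in> Ttilde n absv \<Longrightarrow> ut n A" by (simp add: T_char)
lemma T_is_mat: "A \<in> Ttilde n absv \<Longrightarrow> is_mat n A" by (simp add: T_char ut_def)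
lemma T_low: "A \<in> Ttilde n absv \<Longrightarrow> k < j \<Longrightarrow> A j k = 0" by (simp add: T_char ut_def)
lemma T_diag: "A \<in> Ttilde n absv \<Longrightarrow> j < n \<Longrightarrow> absv (A j j) = 1" by (simp add: T_char)
lemma T_diag_nz: "A \<in> Ttilde n absv \<Longrightarrow> j < n \<Longrightarrow> A j j \<noteq> 0" by (metis T_diag abs_0 zero_neq_one)

lemma Tgroup_simps[simp]: "carrier (Tgroup n absv) = Ttilde n absv"
  "mult (Tgroup n absv) = mat_mult n" "one (Tgroup n absv) = mat_one n"
  by (simp_all add: Tgroup_def)

lemma Binv_T: "A \<in> Ttilde n absv \<Longrightarrow> Binv n A \<in> Ttilde n absv"
  by (simp add: T_char ut_Binv Binv_diag abs_inverse)

lemma mm_T: "A \<in> Ttilde n absv \<Longrightarrow> B \<in> Ttilde n absv \<Longrightarrow> mat_mult n A B \<in> Ttilde n absv"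
  by (simp add: T_char ut_mm ut_mm_diag abs_mult)

lemma one_T: "mat_one n \<in> Ttilde n absv"
  by (simp add: T_char ut_def is_mat_def mat_one_def)

lemma T_nz_all: "A \<in> Ttilde n absv \<Longrightarrow> \<forall>j<n. A j j \<noteq> 0" by (simp add: T_diag_nz)
lemma Binv_right_T: "A \<in> Ttilde n absv \<Longrightarrow> mat_mult n A (Binv n A) = mat_one n"
  by (rule Binv_right[OF T_ut T_nz_all])
lemma Binv_left_T: "A \<in> Ttilde n absv \<Longrightarrow> mat_mult n (Binv n A) A = mat_one n"
  by (rule Binv_left[OF T_ut T_nz_all])

lemma group_T: "group (Tgroup n absv)"
proof (rule groupI)
  fix x y assume "x \<in> carrier (Tgroup n absv)" "y \<in> carrier (Tgroup n absv)"
  then show "x \<otimes>\<^bsub>Tgroup n absv\<^esub> y \<in> carrier (Tgroup n absv)" by (simp add: mm_T)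
next
  show "\<one>\<^bsub>Tgroup n absv\<^esub> \<in> carrier (Tgroup n absv)" by (simp add: one_T)
next
  fix x y z
  show "x \<otimes>\<^bsub>Tgroup n absv\<^esub> y \<otimes>\<^bsub>Tgroup n absv\<^esub> z =
        x \<otimes>\<^bsub>Tgroup n absv\<^esub> (y \<otimes>\<^bsub>Tgroup n absv\<^esub> z)" by (simp add: mm_assoc)
next
  fix x assume "x \<in> carrier (Tgroup n absv)"
  then have "is_mat n x" by (simp add: T_is_mat)
  then show "\<one>\<^bsub>Tgroup n absv\<^esub> \<otimes>\<^bsub>Tgroup n absv\<^esub> x = x" by (simp add: mm_one_left)
next
  fix x assume "x \<in> carrier (Tgroup n absv)"
  then have x: "x \<in> Ttilde n absv" by simp
  have "Binv n x \<in> Ttilde n absv" "mat_mult n (Binv n x) x = mat_one n"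
    using Binv_T[OF x] Binv_left_T[OF x] by auto
  then show "\<exists>y\<in>carrier (Tgroup n absv). y \<otimes>\<^bsub>Tgroup n absv\<^esub> x = \<one>\<^bsub>Tgroup n absv\<^esub>"
    by (intro bexI[of _ "Binv n x"]) simp_all
qed

lemma inv_T: "A \<in> Ttilde n absv \<Longrightarrow> inv\<^bsub>Tgroup n absv\<^esub> A = Binv n A"
  by (rule group.inv_equality[OF group_T]) (simp_all add: Binv_T Binv_left_T)

lemma Binv_diag_T: "A \<in> Ttilde n absv \<Longrightarrow> j < n \<Longrightarrow> Binv n A j j = inverse (A j j)"
  by (simp add: Binv_diag)

lemma Nval_fin: "finite ({0} \<union> {absv (A j k) powr (1 / real (k - j)) |j k. j < k \<and> k < n})"
proof -
  have "{absv (A j k) powr (1 / real (k - j)) |j k. j < k \<and> k < n} \<subseteq>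
     (\<lambda>(j,k). absv (A j k) powr (1 / real (k - j))) ` ({..<n} \<times> {..<n})" by auto
  hence "finite {absv (A j k) powr (1 / real (k - j)) |j k. j < k \<and> k < n}"
    by (rule finite_subset) (intro finite_imageI finite_SigmaI; simp)
  then show ?thesis by simp
qed

lemma Nval_le_iff:
  "Nval n absv A \<le> r \<longleftrightarrow> 0 \<le> r \<and> (\<forall>j k. j < k \<longrightarrow> k < n \<longrightarrow> absv (A j k) \<le> r ^ (k - j))"
proof -
  have *: "(absv (A j k) powr (1 / real (k - j)) \<le> r) = (absv (A j k) \<le> r ^ (k - j))"
    if "j < k" "0 \<le> r" for j k
    by (rule powr_le_iff) (use that in auto)
  have "Nval n absv A \<le> r \<longleftrightarrow> (\<forall>x \<in> {0} \<union> {absv (A j k) powr (1 / real (k - j)) |j k. j < k \<and> k < n}. x \<le> r)"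
    unfolding Nval_def using Nval_fin by (subst Max_le_iff) auto
  also have "\<dots> \<longleftrightarrow> 0 \<le> r \<and> (\<forall>j k. j < k \<longrightarrow> k < n \<longrightarrow> absv (A j k) powr (1 / real (k - j)) \<le> r)"
    by blast
  also have "\<dots> \<longleftrightarrow> 0 \<le> r \<and> (\<forall>j k. j < k \<longrightarrow> k < n \<longrightarrow> absv (A j k) \<le> r ^ (k - j))"
    using * by blast
  finally show ?thesis .
qed

lemma Nval_nonneg[simp]: "0 \<le> Nval n absv A"
  unfolding Nval_def by (rule Max_ge[OF Nval_fin]) simp

lemma Nval_entry: "Nval n absv A \<le> r \<Longrightarrow> j < k \<Longrightarrow> k < n \<Longrightarrow> absv (A j k) \<le> r ^ (k - j)"
  by (simp add: Nval_le_iff)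

lemma matdist_fin: fixes A B :: "'a mat" shows "finite ({0} \<union> {absv (A j k - B j k) |j k. j < n \<and> k < n})"
proof -
  have "finite {absv (A j k - B j k) |j k. j < n \<and> k < n}" by (rule finite_image_set2) auto
  then show ?thesis by simp
qed

lemma matdist_le_iff:
  "matdist n absv A B \<le> r \<longleftrightarrow> 0 \<le> r \<and> (\<forall>j k. j < n \<longrightarrow> k < n \<longrightarrow> absv (A j k - B j k) \<le> r)"
  unfolding matdist_def using matdist_fin[of A B n] by (subst Max_le_iff) auto

lemma matdist_less_iff:
  "matdist n absv A B < r \<longleftrightarrow> 0 < r \<and> (\<forall>j k. j < n \<longrightarrow> k < n \<longrightarrow> absv (A j k - B j k) < r)"
  unfolding matdist_def using matdist_fin[of A B n] by (subst Max_less_iff) auto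

lemma matdist_nonneg[simp]: "0 \<le> matdist n absv A B"
  unfolding matdist_def by (rule Max_ge[OF matdist_fin]) simp

lemma Dval_fin: fixes A B :: "'a mat" shows "finite ({0} \<union> {absv (A j j - B j j) |j. j < n})"
proof -
  have "{absv (A j j - B j j) |j. j < n} \<subseteq> (\<lambda>j. absv (A j j - B j j)) ` {..<n}" by auto
  hence "finite {absv (A j j - B j j) |j. j < n}" by (rule finite_subset) simp
  then show ?thesis by simp
qed

lemma Dval_le_iff:
  "Dval n absv A B \<le> r \<longleftrightarrow> 0 \<le> r \<and> (\<forall>j. j < n \<longrightarrow> absv (A j j - B j j) \<le> r)"
  unfolding Dval_def using Dval_fin[of A B n] by (subst Max_le_iff) auto

lemma Dval_less_iff:
  "Dval n absv A B < r \<longleftrightarrow> 0 < r \<and> (\<forall>j. j < n \<longrightarrow> absv (A j j - B j j) < r)"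
  unfolding Dval_def using Dval_fin[of A B n] by (subst Max_less_iff) auto

lemma Dval_nonneg[simp]: "0 \<le> Dval n absv A B"
  unfolding Dval_def by (rule Max_ge[OF Dval_fin]) simp

section \<open>N is an ultrametric norm\<close>

lemma N_entry_T:
  assumes "A \<in> Ttilde n absv" "Nval n absv A \<le> r" "j \<le> l" "l < n"
  shows "absv (A j l) \<le> r ^ (l - j)"
proof (cases "j = l")
  case True then show ?thesis using assms T_diag by simp
next
  case False then show ?thesis using assms Nval_entry by simp
qed

lemma N_mult:
  assumes A: "A \<in> Ttilde n absv" and B: "B \<in> Ttilde n absv"
  shows "Nval n absv (mat_mult n A B) \<le> max (Nval n absv A) (Nval n absv B)"
proof -
  let ?r = "max (Nval n absv A) (Nval n absv B)"
  have r0: "0 \<le> ?r" by (simp add: le_max_iff_disj)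
  have "absv (mat_mult n A B j k) \<le> ?r ^ (k - j)" if jk: "j < k" "k < n" for j k
  proof -
    have "absv (\<Sum>l<n. A j l * B l k) \<le> ?r ^ (k - j)"
    proof (rule abs_sum_le)
      fix l assume l: "l \<in> {..<n}"
      show "absv (A j l * B l k) \<le> ?r ^ (k - j)"
      proof (cases "l < j")
        case True then show ?thesis using T_low[OF A True] by (simp add: r0)
      next
        case lj: False
        show ?thesis
        proof (cases "k < l")
          case True then show ?thesis using T_low[OF B True] by (simp add: r0)
        next
          case False
          have "absv (A j l) \<le> ?r ^ (l - j)" using N_entry_T[OF A, of ?r j l] lj l by auto
          moreover have "absv (B l k) \<le> ?r ^ (k - l)" using N_entry_T[OF B, of ?r l k] False jk by auto
          ultimately have "absv (A j l * B l k) \<le> ?r ^ (l - j) * ?r ^ (k - l)"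
            unfolding abs_mult by (rule mult_mono) (simp_all add: r0)
          also have "\<dots> = ?r ^ (k - j)" using lj False by (simp add: power_add[symmetric])
          finally show ?thesis .
        qed
      qed
    qed (simp add: r0)
    then show ?thesis using jk by (simp add: mm_apply)
  qed
  then show ?thesis using r0 by (simp add: Nval_le_iff)
qed

lemma N_rinv_le:
  assumes A: "A \<in> Ttilde n absv" and B: "B \<in> Ttilde n absv" and AB: "mat_mult n A B = mat_one n"
  shows "Nval n absv B \<le> Nval n absv A"
proof -
  let ?r = "Nval n absv A"
  have main: "\<forall>j k. j \<le> k \<longrightarrow> k < n \<longrightarrow> k - j = d \<longrightarrow> absv (B j k) \<le> ?r ^ d" for d
  proof (induction d rule: less_induct)
    case (less d)
    show ?case
    proof (intro allI impI)
      fix j k assume jk: "j \<le> k" "k < n" "k - j = d"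
      show "absv (B j k) \<le> ?r ^ d"
      proof (cases "j = k")
        case True then show ?thesis using jk B T_diag by auto
      next
        case False
        hence jk': "j < k" using jk by simp
        have "0 = mat_mult n A B j k" using AB jk' jk by (simp add: mat_one_def)
        also have "\<dots> = (\<Sum>l<n. A j l * B l k)" using jk jk' by (simp add: mm_apply)
        also have "\<dots> = A j j * B j k + (\<Sum>l\<in>{..<n} - {j}. A j l * B l k)"
          using jk jk' by (subst sum.remove[of _ j]) auto
        finally have eq: "A j j * B j k = - (\<Sum>l\<in>{..<n} - {j}. A j l * B l k)" by (simp add: eq_neg_iff_add_eq_0)
        have "absv (\<Sum>l\<in>{..<n} - {j}. A j l * B l k) \<le> ?r ^ d"
        proof (rule abs_sum_le)
          fix l assume l: "l \<in> {..<n} - {j}"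
          show "absv (A j l * B l k) \<le> ?r ^ d"
          proof (cases "l < j")
            case True then show ?thesis using T_low[OF A True] by simp
          next
            case lj: False
            hence lj': "j < l" using l by auto
            show ?thesis
            proof (cases "k < l")
              case True then show ?thesis using T_low[OF B True] by simp
            next
              case False
              have "absv (A j l) \<le> ?r ^ (l - j)" using N_entry_T[OF A, of ?r j l] lj l by auto
              moreover have "absv (B l k) \<le> ?r ^ (k - l)"
                using less.IH[of "k - l"] lj' jk False by auto
              ultimately have "absv (A j l * B l k) \<le> ?r ^ (l - j) * ?r ^ (k - l)"
                unfolding abs_mult by (rule mult_mono) simp_all
              also have "\<dots> = ?r ^ d" using lj False jk by (simp add: power_add[symmetric])
              finally show ?thesis .
            qed
          qed
        qed simp
        moreover have "absv (B j k) = absv (A j j * B j k)"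
          using A T_diag jk by (simp add: abs_mult)
        ultimately show ?thesis using eq by simp
      qed
    qed
  qed
  show ?thesis using main by (simp add: Nval_le_iff)
qed

lemma N_inv: assumes A: "A \<in> Ttilde n absv"
  shows "Nval n absv (Binv n A) = Nval n absv A"
  using N_rinv_le[OF A Binv_T[OF A] Binv_right_T[OF A]] N_rinv_le[OF Binv_T[OF A] A Binv_left_T[OF A]]
  by simp

lemma N_one[simp]: "Nval n absv (mat_one n) = 0"
proof -
  have "Nval n absv (mat_one n) \<le> 0" by (simp add: Nval_le_iff mat_one_def)
  thus ?thesis using Nval_nonneg[of n "mat_one n"] by linarith
qed

end

definition ctrl :: "'b set \<Rightarrow> ('b \<Rightarrow> 'b \<Rightarrow> real) \<Rightarrow> ('b \<Rightarrow> 'b \<Rightarrow> real) \<Rightarrow> bool" where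
  "ctrl S d1 d2 \<longleftrightarrow> (\<forall>x\<in>S. \<forall>e>0. \<exists>\<delta>>0. \<forall>y\<in>S. d1 x y < \<delta> \<longrightarrow> d2 x y < e)"

lemma istop_dtop: fixes d :: "'b \<Rightarrow> 'b \<Rightarrow> real"
  shows "istopology (\<lambda>U. U \<subseteq> S \<and> (\<forall>x\<in>U. \<exists>e>0. \<forall>y\<in>S. d x y < e \<longrightarrow> y \<in> U))"
proof -
  let ?L = "\<lambda>U. U \<subseteq> S \<and> (\<forall>x\<in>U. \<exists>e>0. \<forall>y\<in>S. d x y < e \<longrightarrow> y \<in> U)"
  have 1: "?L (U \<inter> V)" if U: "?L U" and V: "?L V" for U V
  proof (intro conjI ballI)
    show "U \<inter> V \<subseteq> S" using U by auto
    fix x assume "x \<in> U \<inter> V"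
    then obtain e1 e2 where "e1 > 0" "\<forall>y\<in>S. d x y < e1 \<longrightarrow> y \<in> U" "e2 > 0" "\<forall>y\<in>S. d x y < e2 \<longrightarrow> y \<in> V"
      using U V by blast
    then show "\<exists>e>0. \<forall>y\<in>S. d x y < e \<longrightarrow> y \<in> U \<inter> V"
      by (intro exI[of _ "min e1 e2"]) auto
  qed
  have 2: "?L (\<Union>K)" if K: "\<forall>U\<in>K. ?L U" for K
  proof (intro conjI ballI)
    show "\<Union>K \<subseteq> S" using K by auto
    fix x assume "x \<in> \<Union>K"
    then obtain U where U: "U \<in> K" "x \<in> U" by auto
    have LU: "?L U" using K U(1) by (rule bspec)
    then obtain e where e: "e > 0" "\<forall>y\<in>S. d x y < e \<longrightarrow> y \<in> U" using U(2) by blast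
    show "\<exists>e>0. \<forall>y\<in>S. d x y < e \<longrightarrow> y \<in> \<Union>K"
    proof (intro exI[of _ e] conjI ballI impI)
      fix y assume "y \<in> S" "d x y < e"
      then have "y \<in> U" using e by blast
      then show "y \<in> \<Union>K" using U(1) by blast
    qed (rule e(1))
  qed
  show ?thesis unfolding istopology_def using 1 2 by blast
qed

lemma openin_dtop: "openin (dtop S d) U \<longleftrightarrow> U \<subseteq> S \<and> (\<forall>x\<in>U. \<exists>e>0. \<forall>y\<in>S. d x y < e \<longrightarrow> y \<in> U)"
  unfolding dtop_def by (simp add: istop_dtop)

lemma topspace_dtop[simp]: "topspace (dtop S d) = S"
proof -
  have "openin (dtop S d) S" by (auto simp: openin_dtop intro: exI[of _ 1])
  hence "S \<subseteq> topspace (dtop S d)" by (rule openin_subset)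
  moreover have "topspace (dtop S d) \<subseteq> S" unfolding topspace_def by (auto simp: openin_dtop)
  ultimately show ?thesis by blast
qed

lemma dtop_eq:
  assumes "ctrl S d2 d1" "ctrl S d1 d2"
  shows "dtop S d1 = dtop S d2"
  unfolding topology_eq openin_dtop
proof (intro allI iffI conjI ballI)
  fix U x assume U: "U \<subseteq> S \<and> (\<forall>x\<in>U. \<exists>e>0. \<forall>y\<in>S. d1 x y < e \<longrightarrow> y \<in> U)" and x: "x \<in> U"
  then obtain e where e: "e > 0" "\<forall>y\<in>S. d1 x y < e \<longrightarrow> y \<in> U" by blast
  obtain \<delta> where "\<delta> > 0" "\<forall>y\<in>S. d2 x y < \<delta> \<longrightarrow> d1 x y < e" using assms(1) e x U unfolding ctrl_def by blast
  then show "\<exists>e>0. \<forall>y\<in>S. d2 x y < e \<longrightarrow> y \<in> U" using e by blast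
next
  fix U x assume U: "U \<subseteq> S \<and> (\<forall>x\<in>U. \<exists>e>0. \<forall>y\<in>S. d2 x y < e \<longrightarrow> y \<in> U)" and x: "x \<in> U"
  then obtain e where e: "e > 0" "\<forall>y\<in>S. d2 x y < e \<longrightarrow> y \<in> U" by blast
  obtain \<delta> where "\<delta> > 0" "\<forall>y\<in>S. d1 x y < \<delta> \<longrightarrow> d2 x y < e" using assms(2) e x U unfolding ctrl_def by blast
  then show "\<exists>e>0. \<forall>y\<in>S. d1 x y < e \<longrightarrow> y \<in> U" using e by blast
qed auto

lemma compatible_dtop:
  assumes su: "semi_ultrametric_on S d" and c: "ctrl S md d"
  shows "compatible (dtop S md) d"
  unfolding compatible_def topspace_dtop
proof (intro ballI allI)
  fix x r assume x: "x \<in> S"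
  show "openin (dtop S md) {y \<in> S. d x y < r}"
    unfolding openin_dtop
  proof (intro conjI ballI)
    fix y assume y: "y \<in> {y \<in> S. d x y < r}"
    have "0 \<le> d x y" using su x y unfolding semi_ultrametric_on_def semimetric_on_def by auto
    hence r: "r > 0" using y by auto
    obtain \<delta> where \<delta>: "\<delta> > 0" "\<forall>z\<in>S. md y z < \<delta> \<longrightarrow> d y z < r" using c y r unfolding ctrl_def by blast
    have "\<forall>z\<in>S. md y z < \<delta> \<longrightarrow> z \<in> {y \<in> S. d x y < r}"
    proof (intro ballI impI)
      fix z assume z: "z \<in> S" "md y z < \<delta>"
      have "d x z \<le> max (d x y) (d y z)" using su x y z unfolding semi_ultrametric_on_def by auto
      then show "z \<in> {y \<in> S. d x y < r}" using z \<delta> y by auto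
    qed
    then show "\<exists>e>0. \<forall>z\<in>S. md y z < e \<longrightarrow> z \<in> {y \<in> S. d x y < r}" using \<delta> by blast
  qed auto
qed

lemma le_antisym_all: "(\<And>r. (a::real) \<le> r \<longleftrightarrow> b \<le> r) \<Longrightarrow> a = b"
  by (metis order_antisym order_refl)

context padic
begin

lemma Binv_mm: "x \<in> Ttilde n absv \<Longrightarrow> y \<in> Ttilde n absv \<Longrightarrow>
   Binv n (mat_mult n x y) = mat_mult n (Binv n y) (Binv n x)"
proof -
  assume x: "x \<in> Ttilde n absv" and y: "y \<in> Ttilde n absv"
  have "inv\<^bsub>Tgroup n absv\<^esub> (x \<otimes>\<^bsub>Tgroup n absv\<^esub> y) = inv\<^bsub>Tgroup n absv\<^esub> y \<otimes>\<^bsub>Tgroup n absv\<^esub> inv\<^bsub>Tgroup n absv\<^esub> x"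
    by (rule group.inv_mult_group[OF group_T]) (simp_all add: x y)
  then show ?thesis using x y by (simp add: inv_T mm_T)
qed

lemma Binv_Binv: "x \<in> Ttilde n absv \<Longrightarrow> Binv n (Binv n x) = x"
proof -
  assume x: "x \<in> Ttilde n absv"
  have "inv\<^bsub>Tgroup n absv\<^esub> (inv\<^bsub>Tgroup n absv\<^esub> x) = x"
    by (rule group.inv_inv[OF group_T]) (simp add: x)
  then show ?thesis using x by (simp add: inv_T Binv_T)
qed

lemma canc1: "y \<in> Ttilde n absv \<Longrightarrow> is_mat n x \<Longrightarrow> mat_mult n y (mat_mult n (Binv n y) x) = x"
  by (simp add: mm_assoc[symmetric] Binv_right_T mm_one_left)
lemma canc2: "y \<in> Ttilde n absv \<Longrightarrow> is_mat n x \<Longrightarrow> mat_mult n (Binv n y) (mat_mult n y x) = x"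
  by (simp add: mm_assoc[symmetric] Binv_left_T mm_one_left)

lemma dL_eq: "A \<in> Ttilde n absv \<Longrightarrow> B \<in> Ttilde n absv \<Longrightarrow> dL n absv A B = Nval n absv (mat_mult n (Binv n B) A)"
  by (simp add: dL_def inv_T)
lemma dR_eq: "A \<in> Ttilde n absv \<Longrightarrow> B \<in> Ttilde n absv \<Longrightarrow> dR n absv A B = Nval n absv (mat_mult n A (Binv n B))"
  by (simp add: dR_def inv_T)

lemma dL_sym: assumes A: "A \<in> Ttilde n absv" and B: "B \<in> Ttilde n absv"
  shows "dL n absv A B = dL n absv B A"
proof -
  have C: "mat_mult n (Binv n B) A \<in> Ttilde n absv" using A B by (simp add: mm_T Binv_T)
  have "Binv n (mat_mult n (Binv n B) A) = mat_mult n (Binv n A) B"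
    using A B by (simp add: Binv_mm Binv_T Binv_Binv)
  then show ?thesis using N_inv[OF C] A B by (simp add: dL_eq)
qed

lemma dR_sym: assumes A: "A \<in> Ttilde n absv" and B: "B \<in> Ttilde n absv"
  shows "dR n absv A B = dR n absv B A"
proof -
  have C: "mat_mult n A (Binv n B) \<in> Ttilde n absv" using A B by (simp add: mm_T Binv_T)
  have "Binv n (mat_mult n A (Binv n B)) = mat_mult n B (Binv n A)"
    using A B by (simp add: Binv_mm Binv_T Binv_Binv)
  then show ?thesis using N_inv[OF C] A B by (simp add: dR_eq)
qed

lemma dL_refl: "A \<in> Ttilde n absv \<Longrightarrow> dL n absv A A = 0"
  by (simp add: dL_eq Binv_left_T)
lemma dR_refl: "A \<in> Ttilde n absv \<Longrightarrow> dR n absv A A = 0"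
  by (simp add: dR_eq Binv_right_T)

lemma dL_tri: assumes x: "x \<in> Ttilde n absv" and y: "y \<in> Ttilde n absv" and z: "z \<in> Ttilde n absv"
  shows "dL n absv x z \<le> max (dL n absv x y) (dL n absv y z)"
proof -
  have "mat_mult n (Binv n z) x = mat_mult n (mat_mult n (Binv n z) y) (mat_mult n (Binv n y) x)"
    using x y z by (simp add: mm_assoc canc1 T_is_mat)
  hence "dL n absv x z = Nval n absv (mat_mult n (mat_mult n (Binv n z) y) (mat_mult n (Binv n y) x))"
    using x z by (simp add: dL_eq)
  also have "\<dots> \<le> max (dL n absv y z) (dL n absv x y)"
    using x y z by (simp add: dL_eq N_mult mm_T Binv_T)
  finally show ?thesis by linarith
qed

lemma dR_tri: assumes x: "x \<in> Ttilde n absv" and y: "y \<in> Ttilde n absv" and z: "z \<in> Ttilde n absv"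
  shows "dR n absv x z \<le> max (dR n absv x y) (dR n absv y z)"
proof -
  have "mat_mult n x (Binv n z) = mat_mult n (mat_mult n x (Binv n y)) (mat_mult n y (Binv n z))"
    using x y z by (simp add: mm_assoc canc2 Binv_T T_is_mat)
  hence "dR n absv x z = Nval n absv (mat_mult n (mat_mult n x (Binv n y)) (mat_mult n y (Binv n z)))"
    using x z by (simp add: dR_eq)
  also have "\<dots> \<le> max (dR n absv x y) (dR n absv y z)"
    using x y z by (simp add: dR_eq N_mult mm_T Binv_T)
  finally show ?thesis .
qed

lemma dL_semi: "semi_ultrametric_on (Ttilde n absv) (dL n absv)"
  unfolding semi_ultrametric_on_def semimetric_on_def
  using dL_refl dL_sym dL_tri by (simp add: dL_def)

lemma dR_semi: "semi_ultrametric_on (Ttilde n absv) (dR n absv)"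
  unfolding semi_ultrametric_on_def semimetric_on_def
  using dR_refl dR_sym dR_tri by (simp add: dR_def)

lemma dL_linv: "left_invariant (Tgroup n absv) (dL n absv)"
  unfolding left_invariant_def
proof (intro ballI)
  fix g x y assume g: "g \<in> carrier (Tgroup n absv)" and x: "x \<in> carrier (Tgroup n absv)" and y: "y \<in> carrier (Tgroup n absv)"
  have "mat_mult n (Binv n (mat_mult n g y)) (mat_mult n g x) = mat_mult n (Binv n y) x"
    using g x y by (simp add: Binv_mm mm_assoc canc2 T_is_mat)
  then show "dL n absv (g \<otimes>\<^bsub>Tgroup n absv\<^esub> x) (g \<otimes>\<^bsub>Tgroup n absv\<^esub> y) = dL n absv x y"
    using g x y by (simp add: dL_eq mm_T)
qed

lemma dR_rinv: "right_invariant (Tgroup n absv) (dR n absv)"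
  unfolding right_invariant_def
proof (intro ballI)
  fix g x y assume g: "g \<in> carrier (Tgroup n absv)" and x: "x \<in> carrier (Tgroup n absv)" and y: "y \<in> carrier (Tgroup n absv)"
  have "mat_mult n (mat_mult n x g) (Binv n (mat_mult n y g)) = mat_mult n x (Binv n y)"
    using g x y by (simp add: Binv_mm mm_assoc canc1 Binv_T T_is_mat)
  then show "dR n absv (x \<otimes>\<^bsub>Tgroup n absv\<^esub> g) (y \<otimes>\<^bsub>Tgroup n absv\<^esub> g) = dR n absv x y"
    using g x y by (simp add: dR_eq mm_T)
qed

lemma D_entry: "j < n \<Longrightarrow> absv (A j j - B j j) \<le> Dval n absv A B"
  using Dval_le_iff[of n A B "Dval n absv A B"] by simp

lemma D_sym: "Dval n absv A B = Dval n absv B A"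
  by (rule le_antisym_all) (simp add: Dval_le_iff abs_diff_sym)

lemma D_refl: "Dval n absv A A = 0"
  using Dval_le_iff[of n A A 0] Dval_nonneg[of n A A] by simp

lemma D_tri: "Dval n absv x z \<le> max (Dval n absv x y) (Dval n absv y z)"
proof -
  have "absv (x j j - z j j) \<le> max (Dval n absv x y) (Dval n absv y z)" if "j < n" for j
    using abs_diff_ultra[of "x j j" "z j j" "y j j"] D_entry[OF that, of x y] D_entry[OF that, of y z] by linarith
  moreover have "0 \<le> max (Dval n absv x y) (Dval n absv y z)" by (simp add: le_max_iff_disj)
  ultimately show ?thesis using Dval_le_iff[of n x z "max (Dval n absv x y) (Dval n absv y z)"] by blast
qed

lemma D_semi: "semi_ultrametric_on (Ttilde n absv) (Dval n absv)"
  unfolding semi_ultrametric_on_def semimetric_on_def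
proof (intro conjI ballI)
  fix x y z
  show "Dval n absv x x = 0" by (rule D_refl)
  show "0 \<le> Dval n absv x y" by simp
  show "Dval n absv x y = Dval n absv y x" by (rule D_sym)
  show "Dval n absv x z \<le> max (Dval n absv x y) (Dval n absv y z)" by (rule D_tri)
qed

lemma D_linv: "left_invariant (Tgroup n absv) (Dval n absv)"
  unfolding left_invariant_def
proof (intro ballI)
  fix g x y assume g: "g \<in> carrier (Tgroup n absv)" and x: "x \<in> carrier (Tgroup n absv)" and y: "y \<in> carrier (Tgroup n absv)"
  have "absv (mat_mult n g x j j - mat_mult n g y j j) = absv (x j j - y j j)" if "j < n" for j
  proof -
    have "mat_mult n g x j j - mat_mult n g y j j = g j j * (x j j - y j j)"
      using g x y that by (simp add: ut_mm_diag T_ut right_diff_distrib)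
    then show ?thesis using g that T_diag by (simp add: abs_mult)
  qed
  then show "Dval n absv (g \<otimes>\<^bsub>Tgroup n absv\<^esub> x) (g \<otimes>\<^bsub>Tgroup n absv\<^esub> y) = Dval n absv x y"
    by (intro le_antisym_all) (simp add: Dval_le_iff)
qed

lemma D_rinv: "right_invariant (Tgroup n absv) (Dval n absv)"
  unfolding right_invariant_def
proof (intro ballI)
  fix g x y assume g: "g \<in> carrier (Tgroup n absv)" and x: "x \<in> carrier (Tgroup n absv)" and y: "y \<in> carrier (Tgroup n absv)"
  have "absv (mat_mult n x g j j - mat_mult n y g j j) = absv (x j j - y j j)" if "j < n" for j
  proof -
    have "mat_mult n x g j j - mat_mult n y g j j = (x j j - y j j) * g j j"
      using g x y that by (simp add: ut_mm_diag T_ut left_diff_distrib)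
    then show ?thesis using g that T_diag by (simp add: abs_mult)
  qed
  then show "Dval n absv (x \<otimes>\<^bsub>Tgroup n absv\<^esub> g) (y \<otimes>\<^bsub>Tgroup n absv\<^esub> g) = Dval n absv x y"
    by (intro le_antisym_all) (simp add: Dval_le_iff)
qed

end

lemma ctrl_max: "ctrl S m d1 \<Longrightarrow> ctrl S m d2 \<Longrightarrow> ctrl S m (\<lambda>x y. max (d1 x y) (d2 x y))"
  unfolding ctrl_def
proof (intro ballI allI impI)
  fix x :: 'a and e :: real assume c1: "\<forall>x\<in>S. \<forall>e>0. \<exists>\<delta>>0. \<forall>y\<in>S. m x y < \<delta> \<longrightarrow> d1 x y < e"
    and c2: "\<forall>x\<in>S. \<forall>e>0. \<exists>\<delta>>0. \<forall>y\<in>S. m x y < \<delta> \<longrightarrow> d2 x y < e" and x: "x \<in> S" and e: "0 < e"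
  obtain \<delta>1 where d1: "\<delta>1 > 0" "\<forall>y\<in>S. m x y < \<delta>1 \<longrightarrow> d1 x y < e" using c1 x e by blast
  obtain \<delta>2 where d2: "\<delta>2 > 0" "\<forall>y\<in>S. m x y < \<delta>2 \<longrightarrow> d2 x y < e" using c2 x e by blast
  show "\<exists>\<delta>>0. \<forall>y\<in>S. m x y < \<delta> \<longrightarrow> max (d1 x y) (d2 x y) < e"
    using d1 d2 by (intro exI[of _ "min \<delta>1 \<delta>2"]) auto
qed

lemma semi_max:
  assumes "semi_ultrametric_on S d1" "semi_ultrametric_on S d2"
  shows "semi_ultrametric_on S (\<lambda>x y. max (d1 x y) (d2 x y))"
  using assms unfolding semi_ultrametric_on_def semimetric_on_def
  by (simp add: le_max_iff_disj max_def) (smt (verit))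

context padic
begin

lemma md_entry: "is_mat n A \<Longrightarrow> is_mat n B \<Longrightarrow> absv (A j k - B j k) \<le> matdist n absv A B"
proof (cases "j < n \<and> k < n")
  case True then show ?thesis using matdist_le_iff[of n A B "matdist n absv A B"] by simp
next
  case False
  assume "is_mat n A" "is_mat n B"
  then show ?thesis using False by (simp add: is_mat_out)
qed

lemma bounded_mat: assumes X: "is_mat n X" shows "\<exists>M>0. \<forall>j k. absv (X j k) \<le> M"
proof -
  have Z: "is_mat n (\<lambda>_ _. 0::'a)" by (simp add: is_mat_def)
  have h: "absv (X j k) \<le> matdist n absv X (\<lambda>_ _. 0)" for j k using md_entry[OF X Z, of j k] by simp
  have h0: "0 \<le> matdist n absv X (\<lambda>_ _. 0)" by simp
  show ?thesis
  proof (intro exI[of _ "1 + matdist n absv X (\<lambda>_ _. 0)"] conjI allI)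
    show "0 < 1 + matdist n absv X (\<lambda>_ _. 0)" using h0 by linarith
    fix j k show "absv (X j k) \<le> 1 + matdist n absv X (\<lambda>_ _. 0)" using h[of j k] by linarith
  qed
qed

lemma mm_diff_left:
  assumes "j < n" "k < n" "\<forall>l. absv (X j l) \<le> M" "\<forall>l. absv (Y l k - Z l k) \<le> c" "0 \<le> M" "0 \<le> c"
  shows "absv (mat_mult n X Y j k - mat_mult n X Z j k) \<le> M * c"
proof -
  have "mat_mult n X Y j k - mat_mult n X Z j k = (\<Sum>l<n. X j l * (Y l k - Z l k))"
    using assms by (simp add: mm_apply sum_subtractf right_diff_distrib)
  also have "absv \<dots> \<le> M * c"
  proof (rule abs_sum_le)
    fix l show "absv (X j l * (Y l k - Z l k)) \<le> M * c"
      unfolding abs_mult using assms by (intro mult_mono) auto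
  qed (use assms in simp)
  finally show ?thesis .
qed

lemma mm_diff_right:
  assumes "j < n" "k < n" "\<forall>l. absv (X l k) \<le> M" "\<forall>l. absv (Y j l - Z j l) \<le> c" "0 \<le> M" "0 \<le> c"
  shows "absv (mat_mult n Y X j k - mat_mult n Z X j k) \<le> c * M"
proof -
  have "mat_mult n Y X j k - mat_mult n Z X j k = (\<Sum>l<n. (Y j l - Z j l) * X l k)"
    using assms by (simp add: mm_apply sum_subtractf left_diff_distrib)
  also have "absv \<dots> \<le> c * M"
  proof (rule abs_sum_le)
    fix l show "absv ((Y j l - Z j l) * X l k) \<le> c * M"
      unfolding abs_mult using assms by (intro mult_mono) auto
  qed (use assms in simp)
  finally show ?thesis .
qed

lemma small_N:
  assumes E: "E \<in> Ttilde n absv" and s: "0 < s" "s \<le> 1" and M: "0 < M" and c: "M * c < s ^ n"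
    and ent: "\<And>j k. j < k \<Longrightarrow> k < n \<Longrightarrow> absv (E j k) \<le> M * c"
  shows "Nval n absv E \<le> s"
proof -
  have "absv (E j k) \<le> s ^ (k - j)" if "j < k" "k < n" for j k
  proof -
    have "s ^ n \<le> s ^ (k - j)" using s that by (intro power_decreasing) auto
    then show ?thesis using ent[OF that] c by linarith
  qed
  then show ?thesis using s by (simp add: Nval_le_iff)
qed

lemma ctrl_md_dL: "ctrl (Ttilde n absv) (matdist n absv) (dL n absv)"
  unfolding ctrl_def
proof (intro ballI allI impI)
  fix A e assume A: "A \<in> Ttilde n absv" and e: "(0::real) < e"
  obtain M where M: "M > 0" "\<forall>j k. absv (Binv n A j k) \<le> M"
    using bounded_mat[OF T_is_mat[OF Binv_T[OF A]]] by blast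
  define s where "s = min (e/2) (1/2::real)"
  have s: "0 < s" "s \<le> 1" "s < e" using e by (auto simp: s_def)
  define \<delta> where "\<delta> = s ^ n / M"
  have \<delta>: "\<delta> > 0" using s M by (simp add: \<delta>_def)
  show "\<exists>\<delta>>0. \<forall>B\<in>Ttilde n absv. matdist n absv A B < \<delta> \<longrightarrow> dL n absv A B < e"
  proof (intro exI[of _ \<delta>] conjI ballI impI)
    fix B assume B: "B \<in> Ttilde n absv" and md: "matdist n absv A B < \<delta>"
    let ?E = "mat_mult n (Binv n A) B"
    have E: "?E \<in> Ttilde n absv" using A B by (simp add: mm_T Binv_T)
    have c: "M * matdist n absv A B < s ^ n" using md M by (simp add: \<delta>_def pos_less_divide_eq mult.commute)
    have "Nval n absv ?E \<le> s"
    proof (rule small_N[OF E s(1,2) M(1) c])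
      fix j k assume jk: "j < k" "k < n"
      have "mat_mult n (Binv n A) A j k = 0" using jk by (simp add: Binv_left_T[OF A] mat_one_def)
      hence "absv (?E j k) = absv (?E j k - mat_mult n (Binv n A) A j k)" by simp
      also have "\<dots> \<le> M * matdist n absv A B"
      proof (rule mm_diff_left)
        show "\<forall>l. absv (B l k - A l k) \<le> matdist n absv A B"
          using md_entry[OF T_is_mat[OF A] T_is_mat[OF B]] abs_diff_sym by metis
      qed (use jk M in auto)
      finally show "absv (?E j k) \<le> M * matdist n absv A B" .
    qed
    then show "dL n absv A B < e" using s A B by (simp add: dL_sym[OF A B] dL_eq)
  qed (rule \<delta>)
qed

lemma ctrl_md_dR: "ctrl (Ttilde n absv) (matdist n absv) (dR n absv)"
  unfolding ctrl_def
proof (intro ballI allI impI)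
  fix A e assume A: "A \<in> Ttilde n absv" and e: "(0::real) < e"
  obtain M where M: "M > 0" "\<forall>j k. absv (Binv n A j k) \<le> M"
    using bounded_mat[OF T_is_mat[OF Binv_T[OF A]]] by blast
  define s where "s = min (e/2) (1/2::real)"
  have s: "0 < s" "s \<le> 1" "s < e" using e by (auto simp: s_def)
  define \<delta> where "\<delta> = s ^ n / M"
  have \<delta>: "\<delta> > 0" using s M by (simp add: \<delta>_def)
  show "\<exists>\<delta>>0. \<forall>B\<in>Ttilde n absv. matdist n absv A B < \<delta> \<longrightarrow> dR n absv A B < e"
  proof (intro exI[of _ \<delta>] conjI ballI impI)
    fix B assume B: "B \<in> Ttilde n absv" and md: "matdist n absv A B < \<delta>"
    let ?E = "mat_mult n B (Binv n A)"
    have E: "?E \<in> Ttilde n absv" using A B by (simp add: mm_T Binv_T)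
    have c: "M * matdist n absv A B < s ^ n" using md M by (simp add: \<delta>_def pos_less_divide_eq mult.commute)
    have "Nval n absv ?E \<le> s"
    proof (rule small_N[OF E s(1,2) M(1) c])
      fix j k assume jk: "j < k" "k < n"
      have "mat_mult n A (Binv n A) j k = 0" using jk by (simp add: Binv_right_T[OF A] mat_one_def)
      hence "absv (?E j k) = absv (?E j k - mat_mult n A (Binv n A) j k)" by simp
      also have "\<dots> \<le> matdist n absv A B * M"
      proof (rule mm_diff_right)
        show "\<forall>l. absv (B j l - A j l) \<le> matdist n absv A B"
          using md_entry[OF T_is_mat[OF A] T_is_mat[OF B]] abs_diff_sym by metis
      qed (use jk M in auto)
      finally show "absv (?E j k) \<le> M * matdist n absv A B" by (simp add: mult.commute)
    qed
    then show "dR n absv A B < e" using s A B by (simp add: dR_sym[OF A B] dR_eq)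
  qed (rule \<delta>)
qed

lemma D_le_md: "is_mat n A \<Longrightarrow> is_mat n B \<Longrightarrow> Dval n absv A B \<le> matdist n absv A B"
  using md_entry by (simp add: Dval_le_iff)

lemma ctrl_md_D: "ctrl (Ttilde n absv) (matdist n absv) (Dval n absv)"
  unfolding ctrl_def
  by (intro ballI allI impI exI[of _ "_"] conjI; (rule exI)?)
     (auto intro: le_less_trans[OF D_le_md] T_is_mat)

end

context padic
begin

lemma abs_le_0_iff[simp]: "absv x \<le> 0 \<longleftrightarrow> x = 0"
  using abs_nonneg[of x] abs_0_iff[of x] by linarith

lemma E_close_one:
  assumes E: "E \<in> Ttilde n absv" and NE: "Nval n absv E < \<delta>" and d1: "\<delta> \<le> 1"
    and diag: "\<And>k. k < n \<Longrightarrow> absv (E k k - 1) < \<delta>"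
  shows "absv (E l k - mat_one n l k) \<le> \<delta>"
proof -
  have d0: "0 < \<delta>" using NE Nval_nonneg[of n E] by linarith
  consider "\<not> (l < n \<and> k < n)" | "l < n \<and> k < n \<and> l < k" | "l < n \<and> k < n \<and> l = k" | "l < n \<and> k < n \<and> k < l"
    by linarith
  then show ?thesis
  proof cases
    case 1 then show ?thesis using T_is_mat[OF E] d0 by (auto simp: is_mat_out mat_one_def)
  next
    case 2
    have "absv (E l k) \<le> Nval n absv E ^ (k - l)" using 2 by (intro Nval_entry) auto
    also have "\<dots> \<le> Nval n absv E ^ 1" using 2 NE d1 by (intro power_decreasing) auto
    finally show ?thesis using 2 NE by (simp add: mat_one_def)
  next
    case 3 then show ?thesis using diag[of k] by (simp add: mat_one_def)
  next
    case 4 then show ?thesis using T_low[OF E] d0 by (simp add: mat_one_def)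
  qed
qed

lemma ctrl_maxL_md: "ctrl (Ttilde n absv) (\<lambda>A B. max (dL n absv A B) (Dval n absv A B)) (matdist n absv)"
  unfolding ctrl_def
proof (intro ballI allI impI)
  fix A e assume A: "A \<in> Ttilde n absv" and e: "(0::real) < e"
  obtain M where M: "M > 0" "\<forall>j k. absv (A j k) \<le> M" using bounded_mat[OF T_is_mat[OF A]] by blast
  define \<delta> where "\<delta> = min (1/2) (e / (2 * M))"
  have \<delta>: "\<delta> > 0" "\<delta> \<le> 1" "M * \<delta> < e" using M e
    by (auto simp: \<delta>_def min_def field_simps)
  show "\<exists>\<delta>>0. \<forall>B\<in>Ttilde n absv. max (dL n absv A B) (Dval n absv A B) < \<delta> \<longrightarrow> matdist n absv A B < e"
  proof (intro exI[of _ \<delta>] conjI ballI impI)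
    fix B assume B: "B \<in> Ttilde n absv" and md: "max (dL n absv A B) (Dval n absv A B) < \<delta>"
    let ?E = "mat_mult n (Binv n A) B"
    have E: "?E \<in> Ttilde n absv" using A B by (simp add: mm_T Binv_T)
    have NE: "Nval n absv ?E < \<delta>" using md A B by (simp add: dL_sym[OF A B] dL_eq)
    have diag: "absv (?E k k - 1) < \<delta>" if k: "k < n" for k
    proof -
      have Akk: "A k k \<noteq> 0" using T_diag_nz[OF A k] .
      have "?E k k = inverse (A k k) * B k k"
        using A B k by (simp add: ut_mm_diag T_ut ut_Binv Binv_diag)
      hence "?E k k - 1 = inverse (A k k) * (B k k - A k k)" using Akk by (simp add: field_simps)
      hence "absv (?E k k - 1) = absv (A k k - B k k)"
        using T_diag[OF A k] by (simp add: abs_mult abs_inverse abs_diff_sym)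
      also have "\<dots> \<le> Dval n absv A B" using k by (rule D_entry)
      finally show ?thesis using md by simp
    qed
    have ent: "\<forall>l. absv (?E l k - mat_one n l k) \<le> \<delta>" for k
      using E_close_one[OF E NE \<delta>(2) diag] by blast
    have "absv (A j k - B j k) < e" if jk: "j < n" "k < n" for j k
    proof -
      have "B j k = mat_mult n A ?E j k" using A B by (simp add: canc1 T_is_mat)
      moreover have "A j k = mat_mult n A (mat_one n) j k" using A by (simp add: mm_one_right T_is_mat)
      ultimately have "absv (A j k - B j k) = absv (mat_mult n A ?E j k - mat_mult n A (mat_one n) j k)"
        by (simp add: abs_diff_sym)
      also have "\<dots> \<le> M * \<delta>" using jk M ent \<delta> by (intro mm_diff_left) auto
      finally show ?thesis using \<delta> by linarith
    qed
    then show "matdist n absv A B < e" using e by (simp add: matdist_less_iff)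
  qed (rule \<delta>(1))
qed

lemma ctrl_maxR_md: "ctrl (Ttilde n absv) (\<lambda>A B. max (dR n absv A B) (Dval n absv A B)) (matdist n absv)"
  unfolding ctrl_def
proof (intro ballI allI impI)
  fix A e assume A: "A \<in> Ttilde n absv" and e: "(0::real) < e"
  obtain M where M: "M > 0" "\<forall>j k. absv (A j k) \<le> M" using bounded_mat[OF T_is_mat[OF A]] by blast
  define \<delta> where "\<delta> = min (1/2) (e / (2 * M))"
  have \<delta>: "\<delta> > 0" "\<delta> \<le> 1" "\<delta> * M < e" using M e
    by (auto simp: \<delta>_def min_def field_simps)
  show "\<exists>\<delta>>0. \<forall>B\<in>Ttilde n absv. max (dR n absv A B) (Dval n absv A B) < \<delta> \<longrightarrow> matdist n absv A B < e"
  proof (intro exI[of _ \<delta>] conjI ballI impI)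
    fix B assume B: "B \<in> Ttilde n absv" and md: "max (dR n absv A B) (Dval n absv A B) < \<delta>"
    let ?E = "mat_mult n B (Binv n A)"
    have E: "?E \<in> Ttilde n absv" using A B by (simp add: mm_T Binv_T)
    have NE: "Nval n absv ?E < \<delta>" using md A B by (simp add: dR_sym[OF A B] dR_eq)
    have diag: "absv (?E k k - 1) < \<delta>" if k: "k < n" for k
    proof -
      have Akk: "A k k \<noteq> 0" using T_diag_nz[OF A k] .
      have "?E k k = B k k * inverse (A k k)"
        using A B k by (simp add: ut_mm_diag T_ut ut_Binv Binv_diag)
      hence "?E k k - 1 = (B k k - A k k) * inverse (A k k)" using Akk by (simp add: field_simps)
      hence "absv (?E k k - 1) = absv (A k k - B k k)"
        using T_diag[OF A k] by (simp add: abs_mult abs_inverse abs_diff_sym)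
      also have "\<dots> \<le> Dval n absv A B" using k by (rule D_entry)
      finally show ?thesis using md by simp
    qed
    have ent: "\<forall>l. absv (?E j l - mat_one n j l) \<le> \<delta>" for j
      using E_close_one[OF E NE \<delta>(2) diag] by blast
    have "absv (A j k - B j k) < e" if jk: "j < n" "k < n" for j k
    proof -
      have "B j k = mat_mult n ?E A j k" using A B by (simp add: mm_assoc Binv_left_T mm_one_right T_is_mat)
      moreover have "A j k = mat_mult n (mat_one n) A j k" using A by (simp add: mm_one_left T_is_mat)
      ultimately have "absv (A j k - B j k) = absv (mat_mult n ?E A j k - mat_mult n (mat_one n) A j k)"
        by (simp add: abs_diff_sym)
      also have "\<dots> \<le> \<delta> * M" using jk M ent \<delta> by (intro mm_diff_right) auto
      finally show ?thesis using \<delta> by linarith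
    qed
    then show "matdist n absv A B < e" using e by (simp add: matdist_less_iff)
  qed (rule \<delta>(1))
qed

lemma E_one:
  assumes E: "E \<in> Ttilde n absv" and N0: "Nval n absv E = 0" and dg: "\<And>k. k < n \<Longrightarrow> E k k = 1"
  shows "E = mat_one n"
proof (rule mat_eqI[of n])
  fix j k assume jk: "j < n" "k < n"
  consider "j < k" | "j = k" | "k < j" by linarith
  then show "E j k = mat_one n j k"
  proof cases
    case 1
    have "absv (E j k) \<le> 0 ^ (k - j)" using Nval_entry[of n E 0 j k] N0 1 jk by simp
    then show ?thesis using 1 by (simp add: mat_one_def power_0_left)
  qed (use jk dg T_low[OF E] in \<open>auto simp: mat_one_def\<close>)
qed (use T_is_mat[OF E] in auto)

lemma ultraL: "ultrametric_on (Ttilde n absv) (\<lambda>A A'. max (dL n absv A A') (Dval n absv A A'))"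
  unfolding ultrametric_on_def
proof (intro conjI ballI impI)
  show "semi_ultrametric_on (Ttilde n absv) (\<lambda>A A'. max (dL n absv A A') (Dval n absv A A'))"
    by (rule semi_max[OF dL_semi D_semi])
  fix x y assume x: "x \<in> Ttilde n absv" and y: "y \<in> Ttilde n absv"
    and z: "max (dL n absv x y) (Dval n absv x y) = 0"
  have d0: "dL n absv x y = 0" "Dval n absv x y = 0"
  proof -
    have "0 \<le> dL n absv x y" by (simp add: dL_def)
    moreover have "dL n absv x y \<le> max (dL n absv x y) (Dval n absv x y)" "Dval n absv x y \<le> max (dL n absv x y) (Dval n absv x y)" by simp_all
    ultimately show "dL n absv x y = 0" "Dval n absv x y = 0" using z Dval_nonneg[of n x y] by linarith+
  qed
  let ?E = "mat_mult n (Binv n y) x"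
  have E: "?E \<in> Ttilde n absv" using x y by (simp add: mm_T Binv_T)
  have dg: "?E k k = 1" if k: "k < n" for k
  proof -
    have "absv (x k k - y k k) \<le> 0" using D_entry[OF k, of x y] d0 by simp
    hence "x k k = y k k" by simp
    then show ?thesis using x y k T_diag_nz[OF y k] by (simp add: ut_mm_diag T_ut ut_Binv Binv_diag)
  qed
  have "?E = mat_one n" by (rule E_one[OF E _ dg]) (use d0 x y in \<open>simp add: dL_eq\<close>)
  hence "mat_mult n y ?E = y" using y by (simp add: mm_one_right T_is_mat)
  then show "x = y" using x y by (simp add: canc1 T_is_mat)
qed

lemma ultraR: "ultrametric_on (Ttilde n absv) (\<lambda>A A'. max (dR n absv A A') (Dval n absv A A'))"
  unfolding ultrametric_on_def
proof (intro conjI ballI impI)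
  show "semi_ultrametric_on (Ttilde n absv) (\<lambda>A A'. max (dR n absv A A') (Dval n absv A A'))"
    by (rule semi_max[OF dR_semi D_semi])
  fix x y assume x: "x \<in> Ttilde n absv" and y: "y \<in> Ttilde n absv"
    and z: "max (dR n absv x y) (Dval n absv x y) = 0"
  have d0: "dR n absv x y = 0" "Dval n absv x y = 0"
  proof -
    have "0 \<le> dR n absv x y" by (simp add: dR_def)
    moreover have "dR n absv x y \<le> max (dR n absv x y) (Dval n absv x y)" "Dval n absv x y \<le> max (dR n absv x y) (Dval n absv x y)" by simp_all
    ultimately show "dR n absv x y = 0" "Dval n absv x y = 0" using z Dval_nonneg[of n x y] by linarith+
  qed
  let ?E = "mat_mult n x (Binv n y)"
  have E: "?E \<in> Ttilde n absv" using x y by (simp add: mm_T Binv_T)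
  have dg: "?E k k = 1" if k: "k < n" for k
  proof -
    have "absv (x k k - y k k) \<le> 0" using D_entry[OF k, of x y] d0 by simp
    hence "x k k = y k k" by simp
    then show ?thesis using x y k T_diag_nz[OF y k] by (simp add: ut_mm_diag T_ut ut_Binv Binv_diag)
  qed
  have "?E = mat_one n" by (rule E_one[OF E _ dg]) (use d0 x y in \<open>simp add: dR_eq\<close>)
  hence "mat_mult n ?E y = y" using y by (simp add: mm_one_left T_is_mat)
  then show "x = y" using x y by (simp add: mm_assoc Binv_left_T mm_one_right T_is_mat)
qed

lemma maxL_linv: "left_invariant (Tgroup n absv) (\<lambda>A A'. max (dL n absv A A') (Dval n absv A A'))"
  using dL_linv D_linv unfolding left_invariant_def by simp

lemma maxR_rinv: "right_invariant (Tgroup n absv) (\<lambda>A A'. max (dR n absv A A') (Dval n absv A A'))"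
  using dR_rinv D_rinv unfolding right_invariant_def by simp

lemma topL: "dtop (Ttilde n absv) (\<lambda>A A'. max (dL n absv A A') (Dval n absv A A')) = Ttop n absv"
  unfolding Ttop_def
  by (rule dtop_eq[OF ctrl_max[OF ctrl_md_dL ctrl_md_D] ctrl_maxL_md])

lemma topR: "dtop (Ttilde n absv) (\<lambda>A A'. max (dR n absv A A') (Dval n absv A A')) = Ttop n absv"
  unfolding Ttop_def
  by (rule dtop_eq[OF ctrl_max[OF ctrl_md_dR ctrl_md_D] ctrl_maxR_md])

lemma compat_dL: "compatible (Ttop n absv) (dL n absv)"
  unfolding Ttop_def by (rule compatible_dtop[OF dL_semi ctrl_md_dL])

lemma compat_dR: "compatible (Ttop n absv) (dR n absv)"
  unfolding Ttop_def by (rule compatible_dtop[OF dR_semi ctrl_md_dR])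

end

context padic
begin

lemma p_gt1: "p > 1" using prime_p prime_gt_1_nat by blast
lemma p_real: "real p > 1" using p_gt1 by simp

lemma abs_nat_le1: "absv (of_nat m) \<le> 1"
proof (induction m)
  case (Suc m)
  have "absv (of_nat (Suc m)) = absv (1 + of_nat m)" by simp
  also have "\<dots> \<le> max (absv 1) (absv (of_nat m))" by (rule abs_ultra)
  finally show ?case using Suc by simp
qed simp

lemma abs_int_le1: "absv (of_int m) \<le> 1"
proof (cases "m \<ge> 0")
  case True
  then have "(of_int m :: 'a) = of_nat (nat m)" by simp
  then show ?thesis using abs_nat_le1 by simp
next
  case False
  then have "(of_int (- m) :: 'a) = of_nat (nat (- m))" by simp
  hence "absv (of_int (- m) :: 'a) \<le> 1" using abs_nat_le1 by simp
  thus ?thesis by (metis of_int_minus abs_minus)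
qed

lemma abs_coprime:
  assumes "coprime m (int p)" shows "absv (of_int m :: 'a) = 1"
proof -
  obtain u v where uv: "u * m + v * int p = 1" using bezout_int[of m "int p"] assms by auto
  hence "(of_int u * of_int m + of_int v * of_nat p :: 'a) = 1"
    by (metis of_int_1 of_int_add of_int_mult of_int_of_nat_eq)
  hence "1 \<le> max (absv (of_int u * of_int m :: 'a)) (absv (of_int v * of_nat p :: 'a))"
    using abs_ultra[of "of_int u * of_int m :: 'a" "of_int v * of_nat p"] by simp
  moreover have "absv (of_int u * of_int m :: 'a) \<le> absv (of_int m :: 'a)"
    using abs_int_le1[of u] by (simp add: abs_mult mult_left_le_one_le)
  moreover have "absv (of_int v * of_nat p :: 'a) \<le> 1 / real p"
    using abs_int_le1[of v] p_real by (simp add: abs_mult abs_p divide_right_mono)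
  moreover have "1 / real p < 1" using p_real by simp
  ultimately have "1 \<le> absv (of_int m :: 'a)" by linarith
  then show ?thesis using abs_int_le1[of m] by linarith
qed

lemma abs_p_pow: "absv (of_nat p ^ k :: 'a) = (1 / real p) ^ k"
  by (simp add: abs_power abs_p)

lemma rat_approx:
  assumes q1: "absv (of_rat q :: 'a) \<le> 1"
  shows "\<exists>c::nat. c < p ^ k \<and> absv (of_rat q - of_nat c :: 'a) \<le> (1 / real p) ^ k"
proof -
  obtain a b where qab: "quotient_of q = (a, b)" by (cases "quotient_of q")
  have b0: "b > 0" using quotient_of_denom_pos[OF qab] .
  have cop: "coprime a b" using quotient_of_coprime[OF qab] .
  have qe: "(of_rat q :: 'a) = of_int a / of_int b"
    using quotient_of_div[OF qab] by (simp add: of_rat_divide)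
  have pr: "prime (int p)" using prime_p by simp
  have ndvd: "\<not> int p dvd b"
  proof
    assume pb: "int p dvd b"
    have "\<not> int p dvd a"
    proof
      assume "int p dvd a"
      hence "int p dvd gcd a b" using pb by simp
      hence "int p dvd 1" using cop by simp
      thus False using pr by (simp add: prime_int_iff)
    qed
    hence "coprime a (int p)" using prime_imp_coprime[OF pr] by (simp add: coprime_commute)
    hence a1: "absv (of_int a :: 'a) = 1" by (rule abs_coprime)
    obtain b' where b': "b = int p * b'" using pb by (auto simp: dvd_def)
    have "absv (of_int b :: 'a) = (1 / real p) * absv (of_int b' :: 'a)"
      using b' by (simp add: abs_mult abs_p)
    also have "\<dots> \<le> 1 / real p" using abs_int_le1[of b'] p_real by (simp add: divide_right_mono)
    finally have bl: "absv (of_int b :: 'a) \<le> 1 / real p" .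
    have bpos: "absv (of_int b :: 'a) > 0" using b0 by (simp add: less_le)
    have "absv (of_rat q :: 'a) = 1 / absv (of_int b :: 'a)" using qe a1 by (simp add: abs_divide)
    also have "\<dots> \<ge> real p" using bl bpos p_real by (simp add: field_simps)
    finally show False using q1 p_real by linarith
  qed
  have copb: "coprime b (int p)" using prime_imp_coprime[OF pr ndvd] by (simp add: coprime_commute)
  have b1: "absv (of_int b :: 'a) = 1" by (rule abs_coprime[OF copb])
  define K where "K = int p ^ k"
  have K0: "K > 0" using p_gt1 by (simp add: K_def)
  have copK: "coprime b K" using copb by (simp add: K_def)
  obtain u v where uv: "u * b + v * K = 1" using bezout_int[of b K] copK by auto
  define w where "w = (a * u) div K"
  define c0 where "c0 = (a * u) mod K"
  have c0r: "0 \<le> c0" "c0 < K" using K0 by (simp_all add: c0_def)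
  have e1: "a * u = K * w + c0" by (simp add: w_def c0_def)
  define t where "t = a * v + b * w"
  have key: "a - b * c0 = K * t" using uv e1 unfolding t_def by algebra
  have "(of_rat q - of_int c0 :: 'a) = (of_int a - of_int b * of_int c0) / of_int b"
    using qe b0 by (simp add: field_simps)
  also have "\<dots> = of_int (K * t) / of_int b" using key by (metis of_int_diff of_int_mult)
  finally have e2: "(of_rat q - of_int c0 :: 'a) = of_int (K * t) / of_int b" .
  have "absv (of_int K :: 'a) = (1 / real p) ^ k"
    unfolding K_def using abs_p_pow[of k] by simp
  hence "absv (of_rat q - of_int c0 :: 'a) = (1 / real p) ^ k * absv (of_int t :: 'a)"
    using e2 b1 by (simp add: abs_divide abs_mult)
  also have "\<dots> \<le> (1 / real p) ^ k" using abs_int_le1[of t] by (intro mult_left_le) simp_all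
  finally have fin: "absv (of_rat q - of_int c0 :: 'a) \<le> (1 / real p) ^ k" .
  show ?thesis
  proof (intro exI[of _ "nat c0"] conjI)
    show "nat c0 < p ^ k" using c0r unfolding K_def by (metis nat_less_iff of_nat_power)
    show "absv (of_rat q - of_nat (nat c0) :: 'a) \<le> (1 / real p) ^ k" using fin c0r by simp
  qed
qed

lemma field_net:
  assumes e: "0 < \<epsilon>"
  shows "\<exists>F. finite F \<and> (\<forall>x. absv x \<le> R \<longrightarrow> (\<exists>c\<in>F. absv (x - c) < \<epsilon>))"
proof -
  obtain t where t: "R < real p ^ t" using real_arch_pow[OF p_real] by blast
  obtain k where k: "real p ^ t / \<epsilon> < real p ^ k" using real_arch_pow[OF p_real] by blast
  have pt0: "real p ^ t > 0" using p_real by simp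
  have pk0: "real p ^ k > 0" using p_real by simp
  have kk: "real p ^ t * (1 / real p) ^ k < \<epsilon>"
    using k e pk0 by (simp add: field_simps power_one_over)
  define F where "F = (\<lambda>c. of_nat c / of_nat p ^ t :: 'a) ` {..<p ^ k}"
  have "\<exists>c\<in>F. absv (x - c) < \<epsilon>" if x: "absv x \<le> R" for x
  proof -
    have pnz: "(of_nat p ^ t :: 'a) \<noteq> 0" using p_gt1 by simp
    define y where "y = of_nat p ^ t * x"
    have "absv y = (1 / real p) ^ t * absv x" by (simp add: y_def abs_mult abs_p_pow)
    also have "\<dots> \<le> (1 / real p) ^ t * real p ^ t" using x t by (intro mult_left_mono) auto
    also have "\<dots> = 1" using p_real by (simp add: power_one_over)
    finally have y1: "absv y \<le> 1" .
    have pk: "(0::real) < (1 / real p) ^ k" using p_real by simp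
    have pk1: "(1 / real p) ^ k \<le> 1" using p_real by (simp add: power_le_one)
    obtain q where q: "absv (y - of_rat q) < (1 / real p) ^ k" using abs_dense[OF pk] by blast
    have "absv (of_rat q :: 'a) \<le> max (absv y) (absv (of_rat q - y))"
      using abs_ultra[of y "of_rat q - y"] by simp
    hence q1: "absv (of_rat q :: 'a) \<le> 1" using y1 q pk1 abs_diff_sym[of y "of_rat q"] by linarith
    obtain c where c: "c < p ^ k" "absv (of_rat q - of_nat c :: 'a) \<le> (1 / real p) ^ k"
      using rat_approx[OF q1] by blast
    have yc: "absv (y - of_nat c) \<le> (1 / real p) ^ k"
      using abs_diff_ultra[of y "of_nat c" "of_rat q"] q c(2) by linarith
    have "x - of_nat c / of_nat p ^ t = (y - of_nat c) / of_nat p ^ t"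
      using pnz by (simp add: y_def field_simps)
    hence "absv (x - of_nat c / of_nat p ^ t) = absv (y - of_nat c) * real p ^ t"
      using p_real by (simp add: abs_divide abs_p_pow power_one_over)
    also have "\<dots> \<le> (1 / real p) ^ k * real p ^ t" using yc pt0 by (intro mult_right_mono) auto
    also have "\<dots> < \<epsilon>" using kk by (simp add: mult.commute)
    finally show ?thesis using c(1) unfolding F_def by blast
  qed
  then show ?thesis unfolding F_def by blast
qed

end

context padic
begin

lemma matdist_sym: "matdist n absv A B = matdist n absv B A"
  by (rule le_antisym_all) (simp add: matdist_le_iff abs_diff_sym)

lemma md_entry': "j < n \<Longrightarrow> k < n \<Longrightarrow> absv (A j k - B j k) \<le> matdist n absv A B"
  using matdist_le_iff[of n A B "matdist n absv A B"] by simp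

lemma matdist_ultra: "matdist n absv A C \<le> max (matdist n absv A B) (matdist n absv B C)"
proof -
  have "absv (A j k - C j k) \<le> max (matdist n absv A B) (matdist n absv B C)" if "j < n" "k < n" for j k
    using abs_diff_ultra[of "A j k" "C j k" "B j k"] md_entry'[OF that, of A B] md_entry'[OF that, of B C]
    by linarith
  moreover have "0 \<le> max (matdist n absv A B) (matdist n absv B C)" by (simp add: le_max_iff_disj)
  ultimately show ?thesis using matdist_le_iff[of n A C "max (matdist n absv A B) (matdist n absv B C)"] by blast
qed

lemma Met: "Metric_space (Ttilde n absv) (matdist n absv)"
proof
  fix x y z
  show "0 \<le> matdist n absv x y" by simp
  show "matdist n absv x y = matdist n absv y x" by (rule matdist_sym)
  show "x \<in> Ttilde n absv \<Longrightarrow> y \<in> Ttilde n absv \<Longrightarrow> (matdist n absv x y = 0) = (x = y)"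
  proof
    assume x: "x \<in> Ttilde n absv" and y: "y \<in> Ttilde n absv" and z: "matdist n absv x y = 0"
    show "x = y"
    proof (rule mat_eqI[OF T_is_mat[OF x] T_is_mat[OF y]])
      fix j k assume "j < n" "k < n"
      then have "absv (x j k - y j k) \<le> 0" using md_entry'[of j n k x y] z by simp
      then show "x j k = y j k" by simp
    qed
  next
    assume "x = y"
    have "matdist n absv x x \<le> 0" using matdist_le_iff[of n x x 0] by simp
    hence "matdist n absv x x = 0" using matdist_nonneg[of n x x] by linarith
    then show "matdist n absv x y = 0" using \<open>x = y\<close> by simp
  qed
  show "matdist n absv x z \<le> matdist n absv x y + matdist n absv y z"
    using matdist_ultra[of n x z y] matdist_nonneg[of n x y] matdist_nonneg[of n y z] by linarith
qed

lemma Ttop_mtop: "Ttop n absv = Metric_space.mtopology (Ttilde n absv) (matdist n absv)"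
  unfolding topology_eq Ttop_def openin_dtop Metric_space.openin_mtopology[OF Met]
    subset_iff Metric_space.in_mball[OF Met]
  by blast

definition KR :: "nat \<Rightarrow> real \<Rightarrow> 'a mat set" where
  "KR n R = {A \<in> Ttilde n absv. \<forall>j k. absv (A j k) \<le> R}"

definition conv :: "(nat \<Rightarrow> 'a) \<Rightarrow> 'a \<Rightarrow> bool" where
  "conv X L \<longleftrightarrow> (\<forall>e>0. \<exists>M. \<forall>m\<ge>M. absv (X m - L) < e)"

lemma conv_const: "conv (\<lambda>m. c) L \<Longrightarrow> L = c"
proof (rule ccontr)
  assume c: "conv (\<lambda>m. c) L" and ne: "L \<noteq> c"
  hence "c - L \<noteq> 0" by simp
  hence "absv (c - L) \<noteq> 0" by simp
  hence "absv (c - L) > 0" using abs_nonneg[of "c - L"] by linarith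
  then obtain M :: nat where "\<forall>m\<ge>M. absv (c - L) < absv (c - L)" using c unfolding conv_def by blast
  then have "M \<le> M \<longrightarrow> absv (c - L) < absv (c - L)" by blast
  then show False by simp
qed

lemma conv_abs_le:
  assumes c: "conv X L" and b: "\<And>m. absv (X m) \<le> R" shows "absv L \<le> R"
proof (cases "L = 0")
  case True
  have "0 \<le> R" using b[of 0] abs_nonneg[of "X 0"] by linarith
  then show ?thesis using True by simp
next
  case False
  hence "absv L \<noteq> 0" by simp
  hence "absv L > 0" using abs_nonneg[of L] by linarith
  then obtain M where M: "\<forall>m\<ge>M. absv (X m - L) < absv L" using c unfolding conv_def by blast
  have "absv L \<le> max (absv (X M)) (absv (L - X M))"
    using abs_ultra[of "X M" "L - X M"] by simp
  moreover have "absv (L - X M) < absv L" using M abs_diff_sym[of L "X M"] by auto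
  ultimately have "absv L \<le> absv (X M)" by (simp add: max_def split: if_splits)
  then show ?thesis using b[of M] by linarith
qed

lemma conv_abs_eq1:
  assumes c: "conv X L" and b: "\<And>m. absv (X m) = 1" shows "absv L = 1"
proof -
  obtain M where M: "\<forall>m\<ge>M. absv (X m - L) < 1" using c unfolding conv_def by fastforce
  have "absv (L - X M) < absv (X M)" using M b[of M] abs_diff_sym[of L "X M"] by auto
  hence "absv (X M + (L - X M)) = absv (X M)" by (rule abs_strict)
  then show ?thesis using b[of M] by simp
qed

lemma KR_mcomplete: "Metric_space.mcomplete (KR n R) (matdist n absv)"
proof -
  have KRT: "KR n R \<subseteq> Ttilde n absv" by (auto simp: KR_def)
  interpret S: Metric_space "KR n R" "matdist n absv" by (rule Metric_space.subspace[OF Met KRT])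
  show ?thesis unfolding S.mcomplete_def
  proof (intro allI impI)
    fix \<sigma> assume C: "S.MCauchy \<sigma>"
    hence rng: "\<And>m. \<sigma> m \<in> KR n R" and cau: "\<forall>\<epsilon>>0. \<exists>N. \<forall>m m'. N \<le> m \<longrightarrow> N \<le> m' \<longrightarrow> matdist n absv (\<sigma> m) (\<sigma> m') < \<epsilon>"
      unfolding S.MCauchy_def by auto
    have sT: "\<And>m. \<sigma> m \<in> Ttilde n absv" using rng by (auto simp: KR_def)
    have ex: "\<exists>L. conv (\<lambda>m. \<sigma> m j k) L" if jk: "j < n" "k < n" for j k
    proof -
      have "\<forall>e>0. \<exists>M. \<forall>m\<ge>M. \<forall>m'\<ge>M. absv (\<sigma> m j k - \<sigma> m' j k) < e"
      proof (intro allI impI)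
        fix e :: real assume "e > 0"
        then obtain N where "\<forall>m m'. N \<le> m \<longrightarrow> N \<le> m' \<longrightarrow> matdist n absv (\<sigma> m) (\<sigma> m') < e" using cau by blast
        then show "\<exists>M. \<forall>m\<ge>M. \<forall>m'\<ge>M. absv (\<sigma> m j k - \<sigma> m' j k) < e"
          using md_entry'[OF jk] by (meson le_less_trans)
      qed
      then show ?thesis unfolding conv_def by (rule abs_complete)
    qed
    define L where "L = (\<lambda>j k. if j < n \<and> k < n then (SOME L. conv (\<lambda>m. \<sigma> m j k) L) else 0)"
    have Lc: "conv (\<lambda>m. \<sigma> m j k) (L j k)" if jk: "j < n" "k < n" for j k
      using someI_ex[OF ex[OF jk]] jk by (simp add: L_def)
    have LT: "L \<in> Ttilde n absv" unfolding T_char ut_def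
    proof (intro conjI allI impI)
      show "is_mat n L" by (simp add: is_mat_def L_def)
      fix j k :: nat assume kj: "k < j"
      show "L j k = 0"
      proof (cases "j < n \<and> k < n")
        case True
        have "(\<lambda>m. \<sigma> m j k) = (\<lambda>m. 0)" using T_low[OF sT kj] by simp
        then show ?thesis using Lc[of j k] True conv_const by metis
      qed (auto simp: L_def)
    next
      fix j assume j: "j < n"
      show "absv (L j j) = 1" using conv_abs_eq1[OF Lc[OF j j]] T_diag[OF sT j] by simp
    qed
    have LK: "L \<in> KR n R" unfolding KR_def
    proof (intro CollectI conjI allI LT)
      fix j k :: nat show "absv (L j k) \<le> R"
      proof (cases "j < n \<and> k < n")
        case True
        show ?thesis by (rule conv_abs_le[OF Lc]) (use True rng in \<open>auto simp: KR_def\<close>)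
      next
        case False
        have "absv (\<sigma> 0 j k) \<le> R" using rng[of 0] by (simp add: KR_def)
        moreover have "L j k = 0" using False by (auto simp: L_def)
        moreover have "\<sigma> 0 j k = 0" using False is_mat_out[OF T_is_mat[OF sT[of 0]]] by blast
        ultimately show ?thesis by simp
      qed
    qed
    have "limitin S.mtopology \<sigma> L sequentially"
      unfolding S.limit_metric_sequentially
    proof (intro conjI allI impI LK)
      fix \<epsilon> :: real assume e: "\<epsilon> > 0"
      have "\<forall>jk\<in>{..<n} \<times> {..<n}. eventually (\<lambda>m. absv (\<sigma> m (fst jk) (snd jk) - L (fst jk) (snd jk)) < \<epsilon>) sequentially"
      proof
        fix jk assume jk: "jk \<in> {..<n} \<times> {..<n}"
        have c: "conv (\<lambda>m. \<sigma> m (fst jk) (snd jk)) (L (fst jk) (snd jk))" using jk by (intro Lc) auto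
        then obtain M where "\<forall>m\<ge>M. absv (\<sigma> m (fst jk) (snd jk) - L (fst jk) (snd jk)) < \<epsilon>"
          using e unfolding conv_def by blast
        then show "eventually (\<lambda>m. absv (\<sigma> m (fst jk) (snd jk) - L (fst jk) (snd jk)) < \<epsilon>) sequentially"
          unfolding eventually_sequentially by blast
      qed
      hence "eventually (\<lambda>m. \<forall>jk\<in>{..<n} \<times> {..<n}. absv (\<sigma> m (fst jk) (snd jk) - L (fst jk) (snd jk)) < \<epsilon>) sequentially"
        by (intro eventually_ball_finite) auto
      then obtain N where N: "\<forall>m\<ge>N. \<forall>jk\<in>{..<n} \<times> {..<n}. absv (\<sigma> m (fst jk) (snd jk) - L (fst jk) (snd jk)) < \<epsilon>"
        unfolding eventually_sequentially by blast
      show "\<exists>N. \<forall>m\<ge>N. \<sigma> m \<in> KR n R \<and> matdist n absv (\<sigma> m) L < \<epsilon>"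
      proof (intro exI[of _ N] allI impI conjI)
        fix m assume "N \<le> m"
        then show "matdist n absv (\<sigma> m) L < \<epsilon>" using N e by (auto simp: matdist_less_iff)
      qed (rule rng)
    qed
    then show "\<exists>x. limitin S.mtopology \<sigma> x sequentially" by blast
  qed
qed

lemma finite_Pset:
  assumes F: "finite F"
  shows "finite {P :: 'a mat. \<forall>j k. (j < n \<and> k < n \<longrightarrow> P j k \<in> F) \<and> (\<not> (j < n \<and> k < n) \<longrightarrow> P j k = 0)}"
    (is "finite ?P")
proof -
  let ?h = "\<lambda>P :: 'a mat. restrict (\<lambda>jk. P (fst jk) (snd jk)) ({..<n} \<times> {..<n})"
  have "?h ` ?P \<subseteq> PiE ({..<n} \<times> {..<n}) (\<lambda>_. F)" by (auto simp: PiE_def Pi_def)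
  hence fin: "finite (?h ` ?P)" by (rule finite_subset) (intro finite_PiE; simp add: F)
  have "inj_on ?h ?P"
  proof (rule inj_onI)
    fix P Q assume P: "P \<in> ?P" and Q: "Q \<in> ?P" and e: "?h P = ?h Q"
    show "P = Q"
    proof (intro ext)
      fix j k show "P j k = Q j k"
      proof (cases "j < n \<and> k < n")
        case True
        then have "?h P (j, k) = ?h Q (j, k)" using e by simp
        then show ?thesis using True by simp
      qed (use P Q in auto)
    qed
  qed
  then show ?thesis using fin finite_imageD by blast
qed

lemma KR_tb: "Metric_space.mtotally_bounded (KR n R) (matdist n absv) (KR n R)"
proof -
  have KRT: "KR n R \<subseteq> Ttilde n absv" by (auto simp: KR_def)
  interpret S: Metric_space "KR n R" "matdist n absv" by (rule Metric_space.subspace[OF Met KRT])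
  show ?thesis unfolding S.mtotally_bounded_def
  proof (intro allI impI)
    fix \<epsilon> :: real assume e: "\<epsilon> > 0"
    obtain F where F: "finite F" "\<forall>x. absv x \<le> R \<longrightarrow> (\<exists>c\<in>F. absv (x - c) < \<epsilon> / 2)"
      using field_net[of "\<epsilon>/2" R] e by auto
    obtain g where g: "\<And>x. absv x \<le> R \<Longrightarrow> g x \<in> F \<and> absv (x - g x) < \<epsilon> / 2"
      using F(2) by metis
    define Ps where "Ps = {P :: 'a mat. \<forall>j k. (j < n \<and> k < n \<longrightarrow> P j k \<in> F) \<and> (\<not> (j < n \<and> k < n) \<longrightarrow> P j k = 0)}"
    have finPs: "finite Ps" unfolding Ps_def by (rule finite_Pset[OF F(1)])
    define I where "I = {P \<in> Ps. \<exists>A\<in>KR n R. matdist n absv P A < \<epsilon> / 2}"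
    define ch where "ch = (\<lambda>P. SOME A. A \<in> KR n R \<and> matdist n absv P A < \<epsilon> / 2)"
    have ch: "ch P \<in> KR n R \<and> matdist n absv P (ch P) < \<epsilon> / 2" if "P \<in> I" for P
      using that unfolding I_def ch_def by (metis (mono_tags, lifting) mem_Collect_eq someI_ex)
    show "\<exists>K. finite K \<and> K \<subseteq> KR n R \<and> KR n R \<subseteq> (\<Union>x\<in>K. S.mball x \<epsilon>)"
    proof (intro exI[of _ "ch ` I"] conjI)
      show "finite (ch ` I)" using finPs unfolding I_def by auto
      show "ch ` I \<subseteq> KR n R" using ch by auto
      show "KR n R \<subseteq> (\<Union>x\<in>ch ` I. S.mball x \<epsilon>)"
      proof
        fix x assume x: "x \<in> KR n R"
        hence xb: "\<And>j k. absv (x j k) \<le> R" by (auto simp: KR_def)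
        define P where "P = (\<lambda>j k. if j < n \<and> k < n then g (x j k) else 0)"
        have PPs: "P \<in> Ps" unfolding Ps_def P_def using g xb by auto
        have "matdist n absv P x < \<epsilon> / 2" unfolding matdist_less_iff
          using e g xb abs_diff_sym by (auto simp: P_def)
        hence PI: "P \<in> I" unfolding I_def using PPs x by blast
        have "matdist n absv (ch P) x \<le> max (matdist n absv (ch P) P) (matdist n absv P x)"
          by (rule matdist_ultra)
        also have "\<dots> < \<epsilon>" using ch[OF PI] \<open>matdist n absv P x < \<epsilon> / 2\<close> e
          by (simp add: matdist_sym[of n "ch P" P])
        finally have "x \<in> S.mball (ch P) \<epsilon>" using ch[OF PI] x by simp
        then show "x \<in> (\<Union>x\<in>ch ` I. S.mball x \<epsilon>)" using PI by blast
      qed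
    qed
  qed
qed

lemma KR_compact: "compactin (Ttop n absv) (KR n R)"
proof -
  have KRT: "KR n R \<subseteq> Ttilde n absv" by (auto simp: KR_def)
  interpret M: Metric_space "Ttilde n absv" "matdist n absv" by (rule Met)
  interpret S: Submetric "Ttilde n absv" "matdist n absv" "KR n R"
    by (rule Submetric.intro[OF Met]) (simp add: Submetric_axioms_def KRT)
  have "compact_space S.sub.mtopology"
    using S.sub.compact_space_eq_mcomplete_mtotally_bounded KR_mcomplete KR_tb by blast
  then show ?thesis unfolding Ttop_mtop compactin_subspace S.mtopology_submetric[symmetric]
    using KRT by simp
qed

end

context padic
begin

lemma topspace_Ttop[simp]: "topspace (Ttop n absv) = Ttilde n absv"
  by (simp add: Ttop_def)

lemma prod_bound:
  assumes "\<forall>l. absv (X j l) \<le> a" "\<forall>l. absv (Y l k) \<le> b" "0 \<le> a" "0 \<le> b"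
  shows "absv (mat_mult n X Y j k) \<le> a * b"
proof (cases "j < n \<and> k < n")
  case True
  have "absv (\<Sum>l<n. X j l * Y l k) \<le> a * b"
  proof (rule abs_sum_le)
    fix l show "absv (X j l * Y l k) \<le> a * b"
      unfolding abs_mult using assms by (intro mult_mono) auto
  qed (use assms in simp)
  then show ?thesis using True by (simp add: mm_apply)
next
  case False then show ?thesis using assms by (simp add: mm_out)
qed

lemma T_entry_bound:
  assumes E: "E \<in> Ttilde n absv" and N: "Nval n absv E \<le> r" and r: "1 \<le> r"
  shows "absv (E l k) \<le> r ^ n"
proof -
  have rn: "0 \<le> r ^ n" using r by simp
  consider "l \<le> k \<and> k < n" | "k < l" | "\<not> (l < n \<and> k < n)" by linarith
  then show ?thesis
  proof cases
    case 1
    have "absv (E l k) \<le> r ^ (k - l)" using N_entry_T[OF E N] 1 by auto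
    also have "\<dots> \<le> r ^ n" using r 1 by (intro power_increasing) auto
    finally show ?thesis .
  next
    case 2 then show ?thesis using T_low[OF E 2] rn by simp
  next
    case 3 then show ?thesis using is_mat_out[OF T_is_mat[OF E] 3] rn by simp
  qed
qed

lemma proper_dL: "proper_semimetric (Ttop n absv) (dL n absv)"
  unfolding proper_semimetric_def topspace_Ttop
proof (intro allI impI)
  fix K assume H: "closedin (Ttop n absv) K \<and> (\<exists>x\<in>Ttilde n absv. \<exists>r. K \<subseteq> {y \<in> Ttilde n absv. dL n absv x y \<le> r})"
  then obtain x r where x: "x \<in> Ttilde n absv" and K: "K \<subseteq> {y \<in> Ttilde n absv. dL n absv x y \<le> r}" by blast
  obtain Mx where Mx: "Mx > 0" "\<forall>j k. absv (x j k) \<le> Mx" using bounded_mat[OF T_is_mat[OF x]] by blast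
  define r' where "r' = max 1 r"
  have r': "1 \<le> r'" "r \<le> r'" by (auto simp: r'_def)
  have "K \<subseteq> KR n (Mx * r' ^ n)"
  proof
    fix y assume "y \<in> K"
    hence y: "y \<in> Ttilde n absv" and d: "dL n absv x y \<le> r" using K by auto
    let ?E = "mat_mult n (Binv n x) y"
    have E: "?E \<in> Ttilde n absv" using x y by (simp add: mm_T Binv_T)
    have NE: "Nval n absv ?E \<le> r'" using d r' x y by (simp add: dL_sym[OF x y] dL_eq)
    have eb: "\<forall>l. absv (?E l k) \<le> r' ^ n" for k using T_entry_bound[OF E NE r'(1)] by blast
    have "y = mat_mult n x ?E" using x y by (simp add: canc1 T_is_mat)
    hence "absv (y j k) \<le> Mx * r' ^ n" for j k
      using prod_bound[of x j Mx ?E k "r' ^ n" n] Mx eb r' by simp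
    then show "y \<in> KR n (Mx * r' ^ n)" using y by (simp add: KR_def)
  qed
  then show "compactin (Ttop n absv) K" using closed_compactin[OF KR_compact] H by blast
qed

lemma proper_dR: "proper_semimetric (Ttop n absv) (dR n absv)"
  unfolding proper_semimetric_def topspace_Ttop
proof (intro allI impI)
  fix K assume H: "closedin (Ttop n absv) K \<and> (\<exists>x\<in>Ttilde n absv. \<exists>r. K \<subseteq> {y \<in> Ttilde n absv. dR n absv x y \<le> r})"
  then obtain x r where x: "x \<in> Ttilde n absv" and K: "K \<subseteq> {y \<in> Ttilde n absv. dR n absv x y \<le> r}" by blast
  obtain Mx where Mx: "Mx > 0" "\<forall>j k. absv (x j k) \<le> Mx" using bounded_mat[OF T_is_mat[OF x]] by blast
  define r' where "r' = max 1 r"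
  have r': "1 \<le> r'" "r \<le> r'" by (auto simp: r'_def)
  have "K \<subseteq> KR n (r' ^ n * Mx)"
  proof
    fix y assume "y \<in> K"
    hence y: "y \<in> Ttilde n absv" and d: "dR n absv x y \<le> r" using K by auto
    let ?E = "mat_mult n y (Binv n x)"
    have E: "?E \<in> Ttilde n absv" using x y by (simp add: mm_T Binv_T)
    have NE: "Nval n absv ?E \<le> r'" using d r' x y by (simp add: dR_sym[OF x y] dR_eq)
    have eb: "\<forall>l. absv (?E j l) \<le> r' ^ n" for j using T_entry_bound[OF E NE r'(1)] by blast
    have "y = mat_mult n ?E x" using x y by (simp add: mm_assoc Binv_left_T mm_one_right T_is_mat)
    hence "absv (y j k) \<le> r' ^ n * Mx" for j k
      using prod_bound[of ?E j "r' ^ n" x k Mx n] Mx eb r' by simp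
    then show "y \<in> KR n (r' ^ n * Mx)" using y by (simp add: KR_def)
  qed
  then show "compactin (Ttop n absv) K" using closed_compactin[OF KR_compact] H by blast
qed

lemma compact_bounded:
  assumes K: "compactin (Ttop n absv) K"
  shows "\<exists>R0. \<forall>A\<in>K. \<forall>j k. absv (A j k) \<le> R0"
proof (cases "K = {}")
  case True then show ?thesis by blast
next
  case False
  interpret M: Metric_space "Ttilde n absv" "matdist n absv" by (rule Met)
  have "M.mbounded K" using M.compactin_imp_mbounded K unfolding Ttop_mtop by blast
  then obtain x B where KB: "K \<subseteq> M.mcball x B" unfolding M.mbounded_def by blast
  obtain y0 where "y0 \<in> K" using False by blast
  hence x: "x \<in> Ttilde n absv" using KB by auto
  obtain Mx where Mx: "Mx > 0" "\<forall>j k. absv (x j k) \<le> Mx" using bounded_mat[OF T_is_mat[OF x]] by blast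
  have "absv (A j k) \<le> max Mx B" if A: "A \<in> K" for A j k
  proof -
    have AT: "A \<in> Ttilde n absv" and d: "matdist n absv x A \<le> B" using KB A by auto
    have "absv (A j k - x j k) \<le> B"
      using md_entry[OF T_is_mat[OF x] T_is_mat[OF AT], of j k] d abs_diff_sym[of "A j k" "x j k"] by linarith
    moreover have "absv (A j k) \<le> max (absv (x j k)) (absv (A j k - x j k))"
      using abs_ultra[of "x j k" "A j k - x j k"] by simp
    ultimately show ?thesis using Mx(2)[rule_format, of j k] by (simp add: max_def split: if_splits)
  qed
  then show ?thesis by blast
qed

lemma large_sub: "large_compact_open_subgroups (Tgroup n absv) (Ttop n absv)"
  unfolding large_compact_open_subgroups_def
proof (intro allI impI)
  fix K assume K: "compactin (Ttop n absv) K"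
  have KT: "K \<subseteq> Ttilde n absv" using compactin_subset_topspace[OF K] by simp
  obtain R0 where R0: "\<forall>A\<in>K. \<forall>j k. absv (A j k) \<le> R0" using compact_bounded[OF K] by blast
  define R where "R = max 1 R0"
  have R: "1 \<le> R" "R0 \<le> R" by (auto simp: R_def)
  define H where "H = {A \<in> Ttilde n absv. Nval n absv A \<le> R}"
  have KH: "K \<subseteq> H"
  proof
    fix A assume A: "A \<in> K"
    have "absv (A j k) \<le> R ^ (k - j)" if "j < k" "k < n" for j k
    proof -
      have "absv (A j k) \<le> R0" using R0 A by blast
      hence "absv (A j k) \<le> R" using R by linarith
      also have "\<dots> = R ^ 1" by simp
      also have "\<dots> \<le> R ^ (k - j)" using that R by (intro power_increasing) auto
      finally show ?thesis .
    qed
    then show "A \<in> H" using A KT R by (auto simp: H_def Nval_le_iff)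
  qed
  have sub: "subgroup H (Tgroup n absv)"
  proof (rule group.subgroupI[OF group_T])
    show "H \<subseteq> carrier (Tgroup n absv)" by (auto simp: H_def)
    have "mat_one n \<in> H" using one_T[of n] R by (simp add: H_def)
    then show "H \<noteq> {}" by blast
    fix a b assume a: "a \<in> H" and b: "b \<in> H"
    show "inv\<^bsub>Tgroup n absv\<^esub> a \<in> H" using a by (auto simp: H_def inv_T Binv_T N_inv)
    have "Nval n absv (mat_mult n a b) \<le> max (Nval n absv a) (Nval n absv b)"
      using a b by (intro N_mult) (auto simp: H_def)
    then show "a \<otimes>\<^bsub>Tgroup n absv\<^esub> b \<in> H" using a b by (auto simp: H_def mm_T)
  qed
  have opn: "openin (Ttop n absv) H"
    unfolding Ttop_def openin_dtop
  proof (intro conjI ballI)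
    show "H \<subseteq> Ttilde n absv" by (auto simp: H_def)
    fix A assume A: "A \<in> H"
    hence AT: "A \<in> Ttilde n absv" and NA: "Nval n absv A \<le> R" by (auto simp: H_def)
    obtain \<delta> where \<delta>: "\<delta> > 0" "\<forall>B\<in>Ttilde n absv. matdist n absv A B < \<delta> \<longrightarrow> dL n absv A B < 1"
      using ctrl_md_dL AT unfolding ctrl_def by (meson zero_less_one)
    have "\<forall>B\<in>Ttilde n absv. matdist n absv A B < \<delta> \<longrightarrow> B \<in> H"
    proof (intro ballI impI)
      fix B assume B: "B \<in> Ttilde n absv" and md: "matdist n absv A B < \<delta>"
      have "B = mat_mult n A (mat_mult n (Binv n A) B)" using AT B by (simp add: canc1 T_is_mat)
      hence "Nval n absv B \<le> max (Nval n absv A) (Nval n absv (mat_mult n (Binv n A) B))"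
        using N_mult[OF AT, of "mat_mult n (Binv n A) B"] AT B by (simp add: mm_T Binv_T)
      moreover have "Nval n absv (mat_mult n (Binv n A) B) = dL n absv A B"
        using AT B by (simp add: dL_sym[OF AT B] dL_eq)
      ultimately show "B \<in> H" using \<delta> B md NA R by (auto simp: H_def)
    qed
    then show "\<exists>e>0. \<forall>B\<in>Ttilde n absv. matdist n absv A B < e \<longrightarrow> B \<in> H" using \<delta> by blast
  qed
  have cls: "closedin (Ttop n absv) H"
    unfolding closedin_def topspace_Ttop
  proof (intro conjI)
    show "H \<subseteq> Ttilde n absv" by (auto simp: H_def)
    show "openin (Ttop n absv) (Ttilde n absv - H)"
      unfolding Ttop_def openin_dtop
    proof (intro conjI ballI)
      fix A assume A: "A \<in> Ttilde n absv - H"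
      hence AT: "A \<in> Ttilde n absv" and NA: "R < Nval n absv A" by (auto simp: H_def)
      have NA0: "0 < Nval n absv A" using NA R by linarith
      obtain \<delta> where \<delta>: "\<delta> > 0" "\<forall>B\<in>Ttilde n absv. matdist n absv A B < \<delta> \<longrightarrow> dL n absv A B < Nval n absv A"
        using ctrl_md_dL AT NA0 unfolding ctrl_def by meson
      have "\<forall>B\<in>Ttilde n absv. matdist n absv A B < \<delta> \<longrightarrow> B \<in> Ttilde n absv - H"
      proof (intro ballI impI)
        fix B assume B: "B \<in> Ttilde n absv" and md: "matdist n absv A B < \<delta>"
        have "A = mat_mult n B (mat_mult n (Binv n B) A)" using AT B by (simp add: canc1 T_is_mat)
        hence "Nval n absv A \<le> max (Nval n absv B) (Nval n absv (mat_mult n (Binv n B) A))"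
          using N_mult[OF B, of "mat_mult n (Binv n B) A"] AT B by (simp add: mm_T Binv_T)
        moreover have "Nval n absv (mat_mult n (Binv n B) A) = dL n absv A B"
          using AT B by (simp add: dL_eq)
        moreover have "dL n absv A B < Nval n absv A" using \<delta> B md by blast
        ultimately have "Nval n absv A \<le> Nval n absv B" by (simp add: max_def split: if_splits)
        then show "B \<in> Ttilde n absv - H" using B NA by (auto simp: H_def)
      qed
      then show "\<exists>e>0. \<forall>B\<in>Ttilde n absv. matdist n absv A B < e \<longrightarrow> B \<in> Ttilde n absv - H"
        using \<delta> by blast
    qed auto
  qed
  have "H \<subseteq> KR n (R ^ n)"
    using T_entry_bound[of _ n R] R by (auto simp: H_def KR_def)
  hence cpt: "compactin (Ttop n absv) H" using closed_compactin[OF KR_compact _ cls] by blast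
  show "\<exists>H. subgroup H (Tgroup n absv) \<and> compactin (Ttop n absv) H \<and> openin (Ttop n absv) H \<and> K \<subseteq> H"
    using sub cpt opn KH by blast
qed

end

theorem mainTheorem12:
  fixes p :: nat and absv :: "'a::field_char_0 \<Rightarrow> real" and n :: nat
  assumes "prime p" and "padic_field p absv" and "0 < n"
  shows "group (Tgroup n absv)
    \<and> (\<forall>A\<in>Ttilde n absv. \<forall>A'\<in>Ttilde n absv.
          Nval n absv (mat_mult n A A') \<le> max (Nval n absv A) (Nval n absv A'))
    \<and> (\<forall>A\<in>Ttilde n absv. Nval n absv (inv\<^bsub>Tgroup n absv\<^esub> A) = Nval n absv A)
    \<and> semi_ultrametric_on (Ttilde n absv) (dL n absv)
    \<and> left_invariant (Tgroup n absv) (dL n absv)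
    \<and> compatible (Ttop n absv) (dL n absv)
    \<and> proper_semimetric (Ttop n absv) (dL n absv)
    \<and> semi_ultrametric_on (Ttilde n absv) (dR n absv)
    \<and> right_invariant (Tgroup n absv) (dR n absv)
    \<and> compatible (Ttop n absv) (dR n absv)
    \<and> proper_semimetric (Ttop n absv) (dR n absv)
    \<and> large_compact_open_subgroups (Tgroup n absv) (Ttop n absv)
    \<and> semi_ultrametric_on (Ttilde n absv) (Dval n absv)
    \<and> left_invariant (Tgroup n absv) (Dval n absv)
    \<and> right_invariant (Tgroup n absv) (Dval n absv)
    \<and> ultrametric_on (Ttilde n absv) (\<lambda>A A'. max (dL n absv A A') (Dval n absv A A'))
    \<and> left_invariant (Tgroup n absv) (\<lambda>A A'. max (dL n absv A A') (Dval n absv A A'))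
    \<and> dtop (Ttilde n absv) (\<lambda>A A'. max (dL n absv A A') (Dval n absv A A')) = Ttop n absv
    \<and> ultrametric_on (Ttilde n absv) (\<lambda>A A'. max (dR n absv A A') (Dval n absv A A'))
    \<and> right_invariant (Tgroup n absv) (\<lambda>A A'. max (dR n absv A A') (Dval n absv A A'))
    \<and> dtop (Ttilde n absv) (\<lambda>A A'. max (dR n absv A A') (Dval n absv A A')) = Ttop n absv"
proof -
  interpret padic p absv by (rule padic.intro) (use assms in auto)
  have inv: "\<forall>A\<in>Ttilde n absv. Nval n absv (inv\<^bsub>Tgroup n absv\<^esub> A) = Nval n absv A"
    by (simp add: inv_T N_inv)
  have mult: "\<forall>A\<in>Ttilde n absv. \<forall>A'\<in>Ttilde n absv.
          Nval n absv (mat_mult n A A') \<le> max (Nval n absv A) (Nval n absv A')"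
    by (simp add: N_mult)
  show ?thesis
    by (intro conjI group_T mult inv dL_semi dL_linv compat_dL proper_dL dR_semi dR_rinv compat_dR proper_dR
      large_sub D_semi D_linv D_rinv ultraL maxL_linv topL ultraR maxR_rinv topR)
qed

end
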